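(* Let $F=\breve F(\alpha_1,\dots,\alpha_t)$ be a fence. A basis of $A_T(F)$ is \[ \mathcal B_A(F)=\bigcup_{i=1}^t\{\alpha_i\chi_x+\chi_{s_{i-1}}+\chi_{s_i}: x\in\breve S_i\}, \] and consequently $\dim A_T(F)=\sum_{i=1}^t(\alpha_i-1)$.
   Context: Fences: let $\alpha=(\alpha_1,\dots,\alpha_t)$ be positive integers with $t\ge2$ and $\alpha_1,\alpha_t\ge2$. Put $a_0=0$, $a_i=\alpha_1+\dots+\alpha_i$, $n=a_t-1$. The fence $\breve F(\alpha)$ is the poset on $\{x_1,\dots,x_n\}$ whose cover relations are: for $1\le j\le n-1$ with $a_{i-1}\le j<a_i$, $x_j\lessdot x_{j+1}$ if $i$ is odd and $x_j\gtrdot x_{j+1}$ if $i$ is even. Segments: $S_1=\{x_j:1\le j\le a_1\}$, $S_i=\{x_j:a_{i-1}\le j\le a_i\}$ for $2\le i\le t-1$, $S_t=\{x_j:a_{t-1}\le j\le n\}$. Shared elements are $s_i=x_{a_i}$, $i\in[t-1]$; $\breve S_i$ is the set of non-shared elements of $S_i$. Convention: $\chi_{s_0}$ and $\chi_{s_t}$ are identically zero. $\mathcal J(F)$ is the set of order ideals. For $q\in F$, $I\in\mathcal J(F)$: $\chi_q(I)=1$ if $q\in\max(I)$, else $0$; $T_q(I)=1$ if $q\in\min(F\setminus I)$, $-1$ if $q\in\max(I)$, $0$ otherwise. For $f:\mathcal J(F)\to\mathbb R$, write $f\equiv\text{const}$ if $f=c+\sum_{q\in F}c_qT_q$ for real constants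 $c,c_q$. $A_T(F)=\{f\in\operatorname{Span}_{\mathbb R}\{\chi_q:q\in F\}: f\equiv\text{const}\}$. *)

theory Defs
  imports "HOL-Analysis.Analysis" "HOL-Library.Function_Algebras"
begin

instantiation "fun" :: (type, real_vector) real_vector
begin
definition scaleR_fun :: "real \<Rightarrow> ('a \<Rightarrow> 'b) \<Rightarrow> 'a \<Rightarrow> 'b"
  where "scaleR_fun c f = (\<lambda>x. c *\<^sub>R f x)"
instance by standard (auto simp: scaleR_fun_def fun_eq_iff algebra_simps)
end

text \<open>The fence \<open>F(\<alpha>)\<close>, \<open>\<alpha> = (\<alpha>_1,...,\<alpha>_t)\<close> given by a function \<open>alpha\<close>
  on \<open>{1..t}\<close>; element \<open>x_j\<close> is represented by the natural number \<open>j\<close>.\<close>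

definition fa :: "(nat \<Rightarrow> nat) \<Rightarrow> nat \<Rightarrow> nat" where
  "fa alpha i = (\<Sum>k=1..i. alpha k)"

definition fn :: "(nat \<Rightarrow> nat) \<Rightarrow> nat \<Rightarrow> nat" where
  "fn alpha t = fa alpha t - 1"

definition fence :: "(nat \<Rightarrow> nat) \<Rightarrow> nat \<Rightarrow> nat set" where
  "fence alpha t = {1..fn alpha t}"

definition fcover :: "(nat \<Rightarrow> nat) \<Rightarrow> nat \<Rightarrow> nat \<Rightarrow> nat \<Rightarrow> bool" where
  "fcover alpha t x y \<longleftrightarrow>
     (\<exists>j i. 1 \<le> j \<and> j < fn alpha t \<and> 1 \<le> i \<and> i \<le> t \<and>
            fa alpha (i - 1) \<le> j \<and> j < fa alpha i \<and>
            ((odd i \<and> x = j \<and> y = j + 1) \<or> (even i \<and> x = j + 1 \<and> y = j)))"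

definition fle :: "(nat \<Rightarrow> nat) \<Rightarrow> nat \<Rightarrow> nat \<Rightarrow> nat \<Rightarrow> bool" where
  "fle alpha t = (fcover alpha t)\<^sup>*\<^sup>*"

definition fless :: "(nat \<Rightarrow> nat) \<Rightarrow> nat \<Rightarrow> nat \<Rightarrow> nat \<Rightarrow> bool" where
  "fless alpha t x y \<longleftrightarrow> fle alpha t x y \<and> x \<noteq> y"

definition ideals :: "(nat \<Rightarrow> nat) \<Rightarrow> nat \<Rightarrow> nat set set" where
  "ideals alpha t = {I. I \<subseteq> fence alpha t \<and>
      (\<forall>x\<in>fence alpha t. \<forall>y\<in>I. fle alpha t x y \<longrightarrow> x \<in> I)}"

definition maxs :: "(nat \<Rightarrow> nat) \<Rightarrow> nat \<Rightarrow> nat set \<Rightarrow> nat set" where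
  "maxs alpha t S = {q\<in>S. \<not> (\<exists>r\<in>S. fless alpha t q r)}"

definition mins :: "(nat \<Rightarrow> nat) \<Rightarrow> nat \<Rightarrow> nat set \<Rightarrow> nat set" where
  "mins alpha t S = {q\<in>S. \<not> (\<exists>r\<in>S. fless alpha t r q)}"

text \<open>Functions on \<open>\<J>(F)\<close> are represented as functions \<open>nat set \<Rightarrow> real\<close>;
  \<open>\<chi>_q\<close> is extended by zero outside \<open>\<J>(F)\<close>.\<close>
definition chi :: "(nat \<Rightarrow> nat) \<Rightarrow> nat \<Rightarrow> nat \<Rightarrow> nat set \<Rightarrow> real" where
  "chi alpha t q I = (if I \<in> ideals alpha t \<and> q \<in> maxs alpha t I then 1 else 0)"

definition toggle :: "(nat \<Rightarrow> nat) \<Rightarrow> nat \<Rightarrow> nat \<Rightarrow> nat set \<Rightarrow> real" where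
  "toggle alpha t q I =
     (if q \<in> mins alpha t (fence alpha t - I) then 1
      else if q \<in> maxs alpha t I then -1 else 0)"

text \<open>\<open>f \<equiv> const\<close> (only values on \<open>\<J>(F)\<close> matter).\<close>
definition equiv_const :: "(nat \<Rightarrow> nat) \<Rightarrow> nat \<Rightarrow> (nat set \<Rightarrow> real) \<Rightarrow> bool" where
  "equiv_const alpha t f \<longleftrightarrow>
     (\<exists>c cq. \<forall>I\<in>ideals alpha t.
        f I = c + (\<Sum>q\<in>fence alpha t. cq q * toggle alpha t q I))"

definition AT :: "(nat \<Rightarrow> nat) \<Rightarrow> nat \<Rightarrow> (nat set \<Rightarrow> real) set" where
  "AT alpha t = {f \<in> span (chi alpha t ` fence alpha t). equiv_const alpha t f}"

text \<open>Shared element \<open>s_i = x_{a_i}\<close>, with the convention that \<open>\<chi>_{s_0} = \<chi>_{s_t} = 0\<close>.\<close>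
definition chi_s :: "(nat \<Rightarrow> nat) \<Rightarrow> nat \<Rightarrow> nat \<Rightarrow> nat set \<Rightarrow> real" where
  "chi_s alpha t i = (if 1 \<le> i \<and> i \<le> t - 1 then chi alpha t (fa alpha i) else (\<lambda>_. 0))"

definition segment :: "(nat \<Rightarrow> nat) \<Rightarrow> nat \<Rightarrow> nat \<Rightarrow> nat set" where
  "segment alpha t i =
     (if i = 1 then {1..fa alpha 1}
      else if i = t then {fa alpha (t - 1)..fn alpha t}
      else {fa alpha (i - 1)..fa alpha i})"

definition shared :: "(nat \<Rightarrow> nat) \<Rightarrow> nat \<Rightarrow> nat set" where
  "shared alpha t = fa alpha ` {1..t - 1}"

definition nonshared :: "(nat \<Rightarrow> nat) \<Rightarrow> nat \<Rightarrow> nat \<Rightarrow> nat set" where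
  "nonshared alpha t i = segment alpha t i - shared alpha t"

definition BA :: "(nat \<Rightarrow> nat) \<Rightarrow> nat \<Rightarrow> (nat set \<Rightarrow> real) set" where
  "BA alpha t = (\<Union>i\<in>{1..t}.
      {real (alpha i) *\<^sub>R chi alpha t x + chi_s alpha t (i - 1) + chi_s alpha t i
        | x. x \<in> nonshared alpha t i})"

end

theory Submission
  imports Defs
begin

lemma fa_0[simp]: "fa alpha 0 = 0" by (simp add: fa_def)
lemma fa_Suc: "fa alpha (Suc i) = fa alpha i + alpha (Suc i)"
  by (simp add: fa_def)
lemma fa_mono: "i \<le> j \<Longrightarrow> fa alpha i \<le> fa alpha j"
  by (induction j) (auto simp: fa_Suc le_Suc_eq)

locale fctx =
  fixes alpha :: "nat \<Rightarrow> nat" and t :: nat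
  assumes t2: "t \<ge> 2" and apos: "\<forall>i\<in>{1..t}. alpha i > 0"
    and a1: "alpha 1 \<ge> 2" and at: "alpha t \<ge> 2"
begin

abbreviation a where "a \<equiv> fa alpha"
abbreviation n where "n \<equiv> fn alpha t"
abbreviation F where "F \<equiv> fence alpha t"

lemma apos': "1 \<le> i \<Longrightarrow> i \<le> t \<Longrightarrow> alpha i > 0" using apos by auto

lemma a_strict: "i < j \<Longrightarrow> j \<le> t \<Longrightarrow> a i < a j"
proof (induction j)
  case 0 then show ?case by simp
next
  case (Suc j)
  have "alpha (Suc j) > 0" using Suc.prems by (intro apos') auto
  then show ?case using Suc by (cases "i = j") (auto simp: fa_Suc less_Suc_eq)
qed

lemma a_Suc: "a (Suc i) = a i + alpha (Suc i)" by (rule fa_Suc)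

lemma a_t: "a t = n + 1"
proof -
  have "a 1 \<le> a t" using t2 by (intro fa_mono) auto
  moreover have "a 1 = alpha 1" using fa_Suc[of alpha 0] by simp
  ultimately show ?thesis using a1 by (simp add: fn_def)
qed

lemma a_1: "a 1 = alpha 1" using fa_Suc[of alpha 0] by simp

lemma F_def': "F = {1..n}" by (simp add: fence_def)

definition sg :: "nat \<Rightarrow> nat" where "sg j = (LEAST i. j < a i)"

lemma sg_eq: assumes "1 \<le> i" "a (i - 1) \<le> j" "j < a i" shows "sg j = i"
  unfolding sg_def
proof (rule Least_equality)
  show "j < a i" by fact
  fix i' assume "j < a i'"
  show "i \<le> i'"
  proof (rule ccontr)
    assume "\<not> i \<le> i'"
    then have "i' \<le> i - 1" by simp
    then have "a i' \<le> a (i - 1)" by (rule fa_mono)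
    with assms \<open>j < a i'\<close> show False by simp
  qed
qed

lemma seg_ex: assumes "j < a t" shows "\<exists>i. 1 \<le> i \<and> i \<le> t \<and> a (i - 1) \<le> j \<and> j < a i"
proof -
  define i where "i = (LEAST i. j < a i)"
  have ji: "j < a i" unfolding i_def by (rule LeastI[of _ t]) (rule assms)
  have it: "i \<le> t" unfolding i_def by (rule Least_le) (rule assms)
  have i1: "i \<ge> 1" using ji by (cases i) auto
  have "a (i - 1) \<le> j"
  proof (rule ccontr)
    assume "\<not> a (i - 1) \<le> j"
    then have "j < a (i - 1)" by simp
    then have "i \<le> i - 1" unfolding i_def by (rule Least_le)
    with i1 show False by simp
  qed
  with ji it i1 show ?thesis by blast
qed

lemma sg_props: assumes "j < a t"
  shows "1 \<le> sg j \<and> sg j \<le> t \<and> a (sg j - 1) \<le> j \<and> j < a (sg j)"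
  using seg_ex[OF assms] sg_eq by metis

definition upe :: "nat \<Rightarrow> bool" where "upe j \<longleftrightarrow> odd (sg j)"

lemma upe_seg: "1 \<le> i \<Longrightarrow> a (i - 1) \<le> j \<Longrightarrow> j < a i \<Longrightarrow> upe j \<longleftrightarrow> odd i"
  using sg_eq by (simp add: upe_def)

lemma fcover_iff: "fcover alpha t x y \<longleftrightarrow>
   (1 \<le> x \<and> x < n \<and> upe x \<and> y = x + 1) \<or> (1 \<le> y \<and> y < n \<and> \<not> upe y \<and> x = y + 1)"
proof
  assume "fcover alpha t x y"
  then obtain j i where h: "1 \<le> j" "j < n" "1 \<le> i" "i \<le> t" "a (i - 1) \<le> j" "j < a i"
     "(odd i \<and> x = j \<and> y = j + 1) \<or> (even i \<and> x = j + 1 \<and> y = j)"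
    unfolding fcover_def by blast
  have "upe j \<longleftrightarrow> odd i" using h by (intro upe_seg) auto
  with h show "(1 \<le> x \<and> x < n \<and> upe x \<and> y = x + 1) \<or> (1 \<le> y \<and> y < n \<and> \<not> upe y \<and> x = y + 1)"
    by auto
next
  assume h: "(1 \<le> x \<and> x < n \<and> upe x \<and> y = x + 1) \<or> (1 \<le> y \<and> y < n \<and> \<not> upe y \<and> x = y + 1)"
  show "fcover alpha t x y"
  proof (cases "1 \<le> x \<and> x < n \<and> upe x \<and> y = x + 1")
    case True
    then have "x < a t" using a_t by simp
    from sg_props[OF this] True show ?thesis unfolding fcover_def upe_def
      by (intro exI[of _ x] exI[of _ "sg x"]) auto
  next
    case False
    with h have h2: "1 \<le> y \<and> y < n \<and> \<not> upe y \<and> x = y + 1" by blast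
    then have "y < a t" using a_t by simp
    from sg_props[OF this] h2 show ?thesis unfolding fcover_def upe_def
      by (intro exI[of _ y] exI[of _ "sg y"]) auto
  qed
qed

lemma fcover_F: "fcover alpha t x y \<Longrightarrow> x \<in> F \<and> y \<in> F"
  by (auto simp: fcover_iff F_def')

lemma fcover_fless: "fcover alpha t x y \<Longrightarrow> fless alpha t x y"
  by (auto simp: fless_def fle_def fcover_iff)

lemma ideal_iff: "I \<in> ideals alpha t \<longleftrightarrow> I \<subseteq> F \<and> (\<forall>x y. fcover alpha t x y \<longrightarrow> y \<in> I \<longrightarrow> x \<in> I)"
proof
  assume "I \<in> ideals alpha t"
  then show "I \<subseteq> F \<and> (\<forall>x y. fcover alpha t x y \<longrightarrow> y \<in> I \<longrightarrow> x \<in> I)"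
    unfolding ideals_def fle_def using fcover_F by blast
next
  assume h: "I \<subseteq> F \<and> (\<forall>x y. fcover alpha t x y \<longrightarrow> y \<in> I \<longrightarrow> x \<in> I)"
  have "y \<in> I \<longrightarrow> x \<in> I" if "fle alpha t x y" for x y
    using that unfolding fle_def
  proof (induction rule: rtranclp_induct)
    case base then show ?case by simp
  next
    case (step z y) then show ?case using h by blast
  qed
  with h show "I \<in> ideals alpha t" unfolding ideals_def by blast
qed

lemma ideal_iff2: "I \<in> ideals alpha t \<longleftrightarrow> I \<subseteq> F \<and>
   (\<forall>j. 1 \<le> j \<longrightarrow> j < n \<longrightarrow> (upe j \<longrightarrow> j + 1 \<in> I \<longrightarrow> j \<in> I) \<and> (\<not> upe j \<longrightarrow> j \<in> I \<longrightarrow> j + 1 \<in> I))"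
  unfolding ideal_iff fcover_iff by blast

lemma maxs_iff: assumes "I \<in> ideals alpha t"
  shows "q \<in> maxs alpha t I \<longleftrightarrow> q \<in> I \<and> (\<forall>y. fcover alpha t q y \<longrightarrow> y \<notin> I)"
proof
  assume "q \<in> maxs alpha t I"
  then show "q \<in> I \<and> (\<forall>y. fcover alpha t q y \<longrightarrow> y \<notin> I)"
    unfolding maxs_def using fcover_fless by blast
next
  assume h: "q \<in> I \<and> (\<forall>y. fcover alpha t q y \<longrightarrow> y \<notin> I)"
  have "\<not> fless alpha t q r" if "r \<in> I" for r
  proof
    assume "fless alpha t q r"
    then have "(fcover alpha t)\<^sup>*\<^sup>* q r" "q \<noteq> r" by (auto simp: fless_def fle_def)
    then obtain z where z: "fcover alpha t q z" "(fcover alpha t)\<^sup>*\<^sup>* z r"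
      by (metis converse_rtranclpE)
    have "z \<in> F" using fcover_F z(1) by blast
    then have "z \<in> I" using assms that z(2) unfolding ideals_def fle_def by blast
    with h z(1) show False by blast
  qed
  with h show "q \<in> maxs alpha t I" unfolding maxs_def by blast
qed

lemma mins_iff: assumes "I \<in> ideals alpha t"
  shows "q \<in> mins alpha t (F - I) \<longleftrightarrow> q \<in> F \<and> q \<notin> I \<and> (\<forall>x. fcover alpha t x q \<longrightarrow> x \<in> I)"
proof
  assume h: "q \<in> mins alpha t (F - I)"
  then show "q \<in> F \<and> q \<notin> I \<and> (\<forall>x. fcover alpha t x q \<longrightarrow> x \<in> I)"
    unfolding mins_def using fcover_fless fcover_F by blast
next
  assume h: "q \<in> F \<and> q \<notin> I \<and> (\<forall>x. fcover alpha t x q \<longrightarrow> x \<in> I)"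
  have "\<not> fless alpha t r q" if "r \<in> F - I" for r
  proof
    assume "fless alpha t r q"
    then have "(fcover alpha t)\<^sup>*\<^sup>* r q" "q \<noteq> r" by (auto simp: fless_def fle_def)
    then obtain z where z: "(fcover alpha t)\<^sup>*\<^sup>* r z" "fcover alpha t z q"
      by (metis rtranclp.cases)
    have "z \<in> I" using h z(2) by blast
    then have "r \<in> I" using assms that z(1) unfolding ideals_def fle_def by blast
    with that show False by blast
  qed
  with h show "q \<in> mins alpha t (F - I)" unfolding mins_def by blast
qed

lemma chi_pos: assumes "I \<in> ideals alpha t" "q \<in> F"
  shows "chi alpha t q I = (if q \<in> I \<and> \<not> (q < n \<and> upe q \<and> q + 1 \<in> I) \<and> \<not> (2 \<le> q \<and> \<not> upe (q - 1) \<and> q - 1 \<in> I) then 1 else 0)"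
proof -
  have "q \<in> maxs alpha t I \<longleftrightarrow> q \<in> I \<and> \<not> (q < n \<and> upe q \<and> q + 1 \<in> I) \<and> \<not> (2 \<le> q \<and> \<not> upe (q - 1) \<and> q - 1 \<in> I)"
    unfolding maxs_iff[OF assms(1)] fcover_iff using assms(2)
    apply (auto simp: F_def')
    apply (drule spec[of _ "q - 1"]) apply auto
    done
  then show ?thesis using assms(1) by (simp add: chi_def)
qed

lemma toggle_pos: assumes "I \<in> ideals alpha t" "q \<in> F"
  shows "toggle alpha t q I = (if q \<notin> I \<and> (q < n \<and> \<not> upe q \<longrightarrow> q + 1 \<in> I) \<and> (2 \<le> q \<and> upe (q - 1) \<longrightarrow> q - 1 \<in> I) then 1
     else if q \<in> I \<and> \<not> (q < n \<and> upe q \<and> q + 1 \<in> I) \<and> \<not> (2 \<le> q \<and> \<not> upe (q - 1) \<and> q - 1 \<in> I) then -1 else 0)"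
proof -
  have "q \<in> maxs alpha t I \<longleftrightarrow> q \<in> I \<and> \<not> (q < n \<and> upe q \<and> q + 1 \<in> I) \<and> \<not> (2 \<le> q \<and> \<not> upe (q - 1) \<and> q - 1 \<in> I)"
    unfolding maxs_iff[OF assms(1)] fcover_iff using assms(2)
    apply (auto simp: F_def')
    apply (drule spec[of _ "q - 1"]) apply auto
    done
  moreover have "q \<in> mins alpha t (F - I) \<longleftrightarrow> q \<notin> I \<and> (q < n \<and> \<not> upe q \<longrightarrow> q + 1 \<in> I) \<and> (2 \<le> q \<and> upe (q - 1) \<longrightarrow> q - 1 \<in> I)"
    unfolding mins_iff[OF assms(1)] fcover_iff using assms(2)
    apply (auto simp: F_def')
    apply (drule spec[of _ "q - 1"]) apply auto
    done
  ultimately show ?thesis by (simp add: toggle_def)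
qed


lemma loc_eq: assumes "I1 \<in> ideals alpha t" "I2 \<in> ideals alpha t" "q \<in> F"
  "\<And>p. q - 1 \<le> p \<Longrightarrow> p \<le> q + 1 \<Longrightarrow> p \<in> I1 \<longleftrightarrow> p \<in> I2"
shows "chi alpha t q I1 = chi alpha t q I2 \<and> toggle alpha t q I1 = toggle alpha t q I2"
proof -
  have e: "q \<in> I1 \<longleftrightarrow> q \<in> I2" "q + 1 \<in> I1 \<longleftrightarrow> q + 1 \<in> I2" "q - 1 \<in> I1 \<longleftrightarrow> q - 1 \<in> I2"
    using assms(4) by auto
  show ?thesis unfolding chi_pos[OF assms(1,3)] chi_pos[OF assms(2,3)]
      toggle_pos[OF assms(1,3)] toggle_pos[OF assms(2,3)] e by simp
qed

definition G :: "(nat \<Rightarrow> real) \<Rightarrow> (nat \<Rightarrow> real) \<Rightarrow> nat set \<Rightarrow> real" where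
  "G b cq I = (\<Sum>q\<in>F. b q * chi alpha t q I) - (\<Sum>q\<in>F. cq q * toggle alpha t q I)"

definition Dl :: "(nat \<Rightarrow> real) \<Rightarrow> (nat \<Rightarrow> real) \<Rightarrow> nat set \<Rightarrow> nat set \<Rightarrow> nat \<Rightarrow> real" where
  "Dl b cq I1 I2 q = b q * (chi alpha t q I1 - chi alpha t q I2) - cq q * (toggle alpha t q I1 - toggle alpha t q I2)"

lemma G_diff: assumes "I1 \<in> ideals alpha t" "I2 \<in> ideals alpha t" "x \<in> F"
  "\<And>p. p \<noteq> x \<Longrightarrow> p \<in> I1 \<longleftrightarrow> p \<in> I2"
shows "G b cq I1 - G b cq I2 = (if 2 \<le> x then Dl b cq I1 I2 (x - 1) else 0) + Dl b cq I1 I2 x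
   + (if x < n then Dl b cq I1 I2 (x + 1) else 0)"
proof -
  have "G b cq I1 - G b cq I2 = (\<Sum>q\<in>F. Dl b cq I1 I2 q)"
    unfolding G_def Dl_def right_diff_distrib sum_subtractf by simp
  also have "\<dots> = (\<Sum>q\<in>F \<inter> {x - 1, x, x + 1}. Dl b cq I1 I2 q)"
  proof (rule sum.mono_neutral_right)
    show "finite F" by (simp add: fence_def)
    show "F \<inter> {x - 1, x, x + 1} \<subseteq> F" by blast
    show "\<forall>q\<in>F - F \<inter> {x - 1, x, x + 1}. Dl b cq I1 I2 q = 0"
    proof
      fix q assume q: "q \<in> F - F \<inter> {x - 1, x, x + 1}"
      have qF: "q \<in> F" and qx: "q \<noteq> x - 1" "q \<noteq> x" "q \<noteq> x + 1" using q by auto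
      have "p \<in> I1 \<longleftrightarrow> p \<in> I2" if "q - 1 \<le> p" "p \<le> q + 1" for p
      proof -
        have "p \<noteq> x" using that qx by arith
        then show ?thesis by (rule assms(4))
      qed
      then have "chi alpha t q I1 = chi alpha t q I2 \<and> toggle alpha t q I1 = toggle alpha t q I2"
        by (intro loc_eq assms(1,2) qF)
      then show "Dl b cq I1 I2 q = 0" by (simp add: Dl_def)
    qed
  qed
  also have "\<dots> = (if 2 \<le> x then Dl b cq I1 I2 (x - 1) else 0) + Dl b cq I1 I2 x
   + (if x < n then Dl b cq I1 I2 (x + 1) else 0)"
  proof -
    have x: "1 \<le> x" "x \<le> n" using assms(3) by (auto simp: F_def')
    consider "2 \<le> x" "x < n" | "\<not> 2 \<le> x" "x < n" | "2 \<le> x" "\<not> x < n" | "\<not> 2 \<le> x" "\<not> x < n" by blast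
    then show ?thesis
    proof cases
      case 1
      then have "F \<inter> {x - 1, x, x + 1} = {x - 1, x, x + 1}" using x by (auto simp: F_def')
      moreover have "x - 1 \<notin> {x, x + 1}" using x by auto
      ultimately show ?thesis using 1 by (simp add: add.assoc)
    next
      case 2
      then have "F \<inter> {x - 1, x, x + 1} = {x, x + 1}" using x by (auto simp: F_def')
      then show ?thesis using 2 by simp
    next
      case 3
      then have "F \<inter> {x - 1, x, x + 1} = {x - 1, x}" using x by (auto simp: F_def')
      moreover have "x - 1 \<notin> {x}" using x by auto
      ultimately show ?thesis using 3 by simp
    next
      case 4
      then have "F \<inter> {x - 1, x, x + 1} = {x}" using x by (auto simp: F_def')
      then show ?thesis using 4 by simp
    qed
  qed
  finally show ?thesis .
qed

lemma Dl_same: assumes "I1 \<in> ideals alpha t" "I2 \<in> ideals alpha t" "J1 \<in> ideals alpha t" "J2 \<in> ideals alpha t" "q \<in> F"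
  "\<And>p. q - 1 \<le> p \<Longrightarrow> p \<le> q + 1 \<Longrightarrow> p \<in> I1 \<longleftrightarrow> p \<in> J1"
  "\<And>p. q - 1 \<le> p \<Longrightarrow> p \<le> q + 1 \<Longrightarrow> p \<in> I2 \<longleftrightarrow> p \<in> J2"
shows "Dl b cq I1 I2 q = Dl b cq J1 J2 q"
  using loc_eq[OF assms(1,3,5,6)] loc_eq[OF assms(2,4,5,7)] by (simp add: Dl_def)

lemma a_lt: "1 \<le> i \<Longrightarrow> i \<le> t \<Longrightarrow> a (i - 1) < a i"
  by (intro a_strict) auto

lemma a_prev: "1 \<le> i \<Longrightarrow> a (i - 1) + alpha i = a i"
  using a_Suc[of "i - 1"] by simp

lemma upe_prev: "2 \<le> i \<Longrightarrow> i \<le> t \<Longrightarrow> upe (a (i - 1) - 1) \<longleftrightarrow> even i"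
proof -
  assume i: "2 \<le> i" "i \<le> t"
  then obtain k where k: "i = Suc (Suc k)" by (metis add_2_eq_Suc le_Suc_ex)
  have e: "a (Suc k) = a k + alpha (Suc k)" by (rule a_Suc)
  have "alpha (Suc k) > 0" using i k by (intro apos') auto
  then have "upe (a (Suc k) - 1) \<longleftrightarrow> odd (Suc k)"
    using e by (intro upe_seg) auto
  then show ?thesis using k by simp
qed

lemma upe_at: "1 \<le> i \<Longrightarrow> i < t \<Longrightarrow> upe (a i) \<longleftrightarrow> even i"
proof -
  assume i: "1 \<le> i" "i < t"
  have "a i < a (Suc i)" using i by (intro a_strict) auto
  then have "upe (a i) \<longleftrightarrow> odd (Suc i)" by (intro upe_seg) auto
  then show ?thesis by simp
qed

lemma a_ge: "1 \<le> i \<Longrightarrow> i \<le> t \<Longrightarrow> a i \<ge> i"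
proof (induction i)
  case 0 then show ?case by simp
next
  case (Suc i)
  have "alpha (Suc i) > 0" using Suc.prems by (intro apos') auto
  then show ?case using Suc by (cases "i = 0") (auto simp: a_Suc)
qed

lemma a1_ge2: "1 \<le> i \<Longrightarrow> a i \<ge> 2"
  using fa_mono[of 1 i alpha] a_1 a1 by simp

lemma a_lt_n: "1 \<le> i \<Longrightarrow> i < t \<Longrightarrow> a i < n"
proof -
  assume i: "1 \<le> i" "i < t"
  have "a i \<le> a (t - 1)" using i by (intro fa_mono) auto
  moreover have "a (t - 1) + alpha t = a t" using a_prev[of t] t2 by simp
  ultimately show ?thesis using at a_t by simp
qed

lemma prefix_ideal: assumes "p \<le> n" "1 \<le> p \<Longrightarrow> p < n \<Longrightarrow> upe p" shows "{1..p} \<in> ideals alpha t"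
  unfolding ideal_iff2
proof (intro conjI allI impI)
  show "{1..p} \<subseteq> F" using assms(1) by (auto simp: F_def')
  fix j assume j: "1 \<le> j" "j < n"
  show "j + 1 \<in> {1..p} \<Longrightarrow> j \<in> {1..p}" using j by auto
  assume "\<not> upe j" "j \<in> {1..p}"
  then show "j + 1 \<in> {1..p}" using assms(2) j by (cases "j = p") auto
qed

lemma suffix_ideal: assumes "1 \<le> p" "2 \<le> p \<Longrightarrow> p \<le> n \<Longrightarrow> \<not> upe (p - 1)" shows "{p..n} \<in> ideals alpha t"
  unfolding ideal_iff2
proof (intro conjI allI impI)
  show "{p..n} \<subseteq> F" using assms(1) by (auto simp: F_def')
  fix j assume j: "1 \<le> j" "j < n"
  show "j \<in> {p..n} \<Longrightarrow> j + 1 \<in> {p..n}" using j by auto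
  assume "upe j" "j + 1 \<in> {p..n}"
  then show "j \<in> {p..n}" using assms(2) j by (cases "j + 1 = p") auto
qed

end

context fctx begin

definition pp :: "nat \<Rightarrow> nat \<Rightarrow> nat" where
  "pp i j = (if odd i then a (i - 1) + j else a i - j)"

lemma upe_odd: "odd i \<Longrightarrow> 1 \<le> i \<Longrightarrow> a (i - 1) \<le> y \<Longrightarrow> y < a i \<Longrightarrow> upe y"
  using upe_seg by blast
lemma upe_even: "even i \<Longrightarrow> 1 \<le> i \<Longrightarrow> a (i - 1) \<le> y \<Longrightarrow> y < a i \<Longrightarrow> \<not> upe y"
  using upe_seg by blast

end

locale fw = fctx +
  fixes b cq :: "nat \<Rightarrow> real" and c :: real
  assumes HG: "\<And>I. I \<in> ideals alpha t \<Longrightarrow> G b cq I = c"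
begin

lemma ev: assumes "J \<in> ideals alpha t" "insert x J \<in> ideals alpha t" "x \<in> F" "x \<notin> J"
  shows "(if 2 \<le> x then Dl b cq (insert x J) J (x - 1) else 0) + Dl b cq (insert x J) J x
   + (if x < n then Dl b cq (insert x J) J (x + 1) else 0) = 0"
proof -
  have "G b cq (insert x J) - G b cq J = 0" using HG assms(1,2) by simp
  moreover have "G b cq (insert x J) - G b cq J = (if 2 \<le> x then Dl b cq (insert x J) J (x - 1) else 0) + Dl b cq (insert x J) J x
   + (if x < n then Dl b cq (insert x J) J (x + 1) else 0)"
    by (rule G_diff[OF assms(2,1,3)]) auto
  ultimately show ?thesis by simp
qed

lemma chain_odd: assumes i: "odd i" "1 \<le> i" "i \<le> t" and j: "1 \<le> j" "j < alpha i"
  shows "b (a (i - 1) + j) + 2 * cq (a (i - 1) + j) =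
    (if 2 \<le> j then b (a (i - 1) + j - 1) + cq (a (i - 1) + j - 1) else 0)
    + (if j + 2 \<le> alpha i then cq (a (i - 1) + j + 1) else 0)"
proof -
  define x where "x = a (i - 1) + j"
  have ai: "a (i - 1) + alpha i = a i" using a_prev i by simp
  have up: "\<And>y. a (i - 1) \<le> y \<Longrightarrow> y < a i \<Longrightarrow> upe y" using upe_odd i by blast
  have xF: "x \<in> F" using x_def j ai a_t fa_mono[of i t alpha] i by (auto simp: F_def')
  have x1: "x - 1 = a (i - 1) + j - 1" "x + 1 = a (i - 1) + j + 1" using x_def j by auto
  have upx: "upe x" using up x_def j ai by simp
  have upx1: "upe (x - 1)" using up x_def j ai by simp
  have J: "{1..x - 1} \<in> ideals alpha t"
    by (rule prefix_ideal) (use xF upx1 in \<open>auto simp: F_def'\<close>)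
  have Jx: "{1..x} \<in> ideals alpha t"
    by (rule prefix_ideal) (use xF upx in \<open>auto simp: F_def'\<close>)
  have ins: "insert x {1..x - 1} = {1..x}" using xF by (auto simp: F_def')
  have E: "(if 2 \<le> x then Dl b cq {1..x} {1..x - 1} (x - 1) else 0) + Dl b cq {1..x} {1..x - 1} x
   + (if x < n then Dl b cq {1..x} {1..x - 1} (x + 1) else 0) = 0"
    using ev[OF J _ xF, unfolded ins, OF Jx] by auto
  have D0: "Dl b cq {1..x} {1..x - 1} x = b x + 2 * cq x"
    unfolding Dl_def chi_pos[OF J xF] chi_pos[OF Jx xF] toggle_pos[OF J xF] toggle_pos[OF Jx xF]
    using upx upx1 xF by (auto simp: F_def')
  have D1: "Dl b cq {1..x} {1..x - 1} (x - 1) = (if 2 \<le> j then - (b (x - 1) + cq (x - 1)) else 0)"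
    if "2 \<le> x"
  proof -
    have F1: "x - 1 \<in> F" using that xF by (auto simp: F_def')
    have u2: "upe (x - 1 - 1) \<longleftrightarrow> 2 \<le> j"
    proof (cases "2 \<le> j")
      case True then show ?thesis using up x_def ai j by simp
    next
      case False
      then have "j = 1" using j by simp
      then have "i \<noteq> 1" using that x_def by auto
      then have "2 \<le> i" using i by simp
      then have "upe (a (i - 1) - 1) \<longleftrightarrow> even i" using i by (intro upe_prev) auto
      then show ?thesis using False \<open>j = 1\<close> x_def i by simp
    qed
    have xn: "x - 1 < n" using xF that by (auto simp: F_def')
    have x3: "\<not> 2 \<le> j \<Longrightarrow> 3 \<le> x"
    proof -
      assume "\<not> 2 \<le> j"
      then have "j = 1" using j by simp
      then have "i \<noteq> 1" using that x_def by auto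
      then have "a (i - 1) \<ge> 2" using i by (intro a1_ge2) auto
      then show "3 \<le> x" using x_def \<open>j = 1\<close> by simp
    qed
    show ?thesis
      unfolding Dl_def chi_pos[OF J F1] chi_pos[OF Jx F1] toggle_pos[OF J F1] toggle_pos[OF Jx F1]
      using upx upx1 u2 that xn x3 by auto
  qed
  have D2: "Dl b cq {1..x} {1..x - 1} (x + 1) = (if j + 2 \<le> alpha i then - cq (x + 1) else 0)"
    if "x < n"
  proof -
    have F1: "x + 1 \<in> F" using that xF by (auto simp: F_def')
    have u2: "x + 1 < n \<Longrightarrow> upe (x + 1) \<longleftrightarrow> j + 2 \<le> alpha i"
    proof (cases "j + 2 \<le> alpha i")
      case True then show ?thesis using up x_def ai j by simp
    next
      case False
      then have "x + 1 = a i" using x_def ai j by simp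
      moreover assume "x + 1 < n"
      ultimately have "i < t" using a_t by (metis i(3) le_neq_implies_less less_add_same_cancel1 less_asym zero_less_one)
      then have "upe (a i) \<longleftrightarrow> even i" using i by (intro upe_at) auto
      then show ?thesis using False \<open>x + 1 = a i\<close> i by simp
    qed
    have u3: "\<not> (x + 1 < n) \<Longrightarrow> j + 2 \<le> alpha i"
    proof (rule ccontr)
      assume "\<not> (x + 1 < n)" "\<not> j + 2 \<le> alpha i"
      then have "x + 1 = a i" "x + 1 = n" using x_def ai j that by auto
      then show False using a_lt_n[of i] a_t i by (cases "i = t") auto
    qed
    show ?thesis
      unfolding Dl_def chi_pos[OF J F1] chi_pos[OF Jx F1] toggle_pos[OF J F1] toggle_pos[OF Jx F1]
      using upx upx1 u2 u3 that xF by (auto simp: F_def')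
  qed
  have "\<not> x < n \<Longrightarrow> \<not> j + 2 \<le> alpha i"
    using x_def ai a_t fa_mono[of i t alpha] i by auto
  moreover have "\<not> 2 \<le> x \<Longrightarrow> \<not> 2 \<le> j" using x_def by auto
  ultimately show ?thesis using E D0 D1 D2 x1 unfolding x_def[symmetric]
    by (auto split: if_splits)
qed


lemma chain_even: assumes i: "even i" "1 \<le> i" "i \<le> t" and j: "1 \<le> j" "j < alpha i"
  shows "b (a i - j) + 2 * cq (a i - j) =
    (if 2 \<le> j then b (a i - j + 1) + cq (a i - j + 1) else 0)
    + (if j + 2 \<le> alpha i then cq (a i - j - 1) else 0)"
proof -
  define x where "x = a i - j"
  have ai: "a (i - 1) + alpha i = a i" using a_prev i by simp
  have i2: "2 \<le> i" using i by presburger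
  have ag: "a (i - 1) \<ge> 2" using i2 by (intro a1_ge2) auto
  have dn: "\<And>y. a (i - 1) \<le> y \<Longrightarrow> y < a i \<Longrightarrow> \<not> upe y" using upe_even i by blast
  have ait: "a i \<le> n + 1" using a_t fa_mono[of i t alpha] i by simp
  have xF: "x \<in> F" using x_def j ai ait ag by (auto simp: F_def')
  have x3: "3 \<le> x" using x_def j ai ag by simp
  have dnx: "\<not> upe x" using dn x_def j ai by simp
  have dnx1: "\<not> upe (x - 1)" using dn x_def j ai by simp
  have J: "{x + 1..n} \<in> ideals alpha t"
    by (rule suffix_ideal) (use dnx in auto)
  have Jx: "{x..n} \<in> ideals alpha t"
    by (rule suffix_ideal) (use x3 dnx1 in auto)
  have ins: "insert x {x + 1..n} = {x..n}" using xF by (auto simp: F_def')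
  have E: "(if 2 \<le> x then Dl b cq {x..n} {x + 1..n} (x - 1) else 0) + Dl b cq {x..n} {x + 1..n} x
   + (if x < n then Dl b cq {x..n} {x + 1..n} (x + 1) else 0) = 0"
    using ev[OF J _ xF, unfolded ins, OF Jx] by auto
  have D0: "Dl b cq {x..n} {x + 1..n} x = b x + 2 * cq x"
    unfolding Dl_def chi_pos[OF J xF] chi_pos[OF Jx xF] toggle_pos[OF J xF] toggle_pos[OF Jx xF]
    using dnx dnx1 xF by (auto simp: F_def')
  have D1: "Dl b cq {x..n} {x + 1..n} (x + 1) = (if 2 \<le> j then - (b (x + 1) + cq (x + 1)) else 0)"
    if "x < n"
  proof -
    have F1: "x + 1 \<in> F" using that xF by (auto simp: F_def')
    have u3: "\<not> x + 1 < n \<Longrightarrow> 2 \<le> j"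
    proof (rule ccontr)
      assume "\<not> x + 1 < n" "\<not> 2 \<le> j"
      then have "x + 1 = a i" "x + 1 = n" using x_def ai j that by auto
      then show False using a_lt_n[of i] a_t i by (cases "i = t") auto
    qed
    have u2: "x + 1 < n \<Longrightarrow> upe (x + 1) \<longleftrightarrow> \<not> 2 \<le> j"
    proof (cases "2 \<le> j")
      case True then show ?thesis using dn x_def ai j by simp
    next
      case False
      then have "x + 1 = a i" using x_def ai j by simp
      moreover assume "x + 1 < n"
      ultimately have "i < t" using a_t i by (cases "i = t") auto
      then have "upe (a i) \<longleftrightarrow> even i" using i by (intro upe_at) auto
      then show ?thesis using False \<open>x + 1 = a i\<close> i by simp
    qed
    show ?thesis
      unfolding Dl_def chi_pos[OF J F1] chi_pos[OF Jx F1] toggle_pos[OF J F1] toggle_pos[OF Jx F1]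
      using dnx dnx1 u2 u3 that x3 by auto
  qed
  have D2: "Dl b cq {x..n} {x + 1..n} (x - 1) = (if j + 2 \<le> alpha i then - cq (x - 1) else 0)"
  proof -
    have F1: "x - 1 \<in> F" using x3 xF by (auto simp: F_def')
    have xn: "x - 1 < n" using xF x3 by (auto simp: F_def')
    have u4: "j + 2 \<le> alpha i \<Longrightarrow> \<not> upe (x - 1 - 1)" using dn x_def ai j by simp
    have u5: "\<not> j + 2 \<le> alpha i \<Longrightarrow> upe (x - 1 - 1) \<and> 2 \<le> x - 1"
    proof -
      assume "\<not> j + 2 \<le> alpha i"
      then have "x - 1 = a (i - 1)" using x_def ai j by simp
      moreover have "upe (a (i - 1) - 1) \<longleftrightarrow> even i" using i2 i by (intro upe_prev) auto
      ultimately show ?thesis using i ag by simp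
    qed
    show ?thesis
      unfolding Dl_def chi_pos[OF J F1] chi_pos[OF Jx F1] toggle_pos[OF J F1] toggle_pos[OF Jx F1]
      using dnx dnx1 u4 u5 xn x3 by auto
  qed
  have "\<not> x < n \<Longrightarrow> \<not> 2 \<le> j"
    using x_def ai ait j xF by (auto simp: F_def')
  moreover have "x - 1 = a i - j - 1" "x + 1 = a i - j + 1" using x_def j ai by auto
  ultimately show ?thesis using E D0 D1 D2 x3 unfolding x_def[symmetric]
    by (auto split: if_splits)
qed


lemma ev': assumes "J \<in> ideals alpha t" "K \<in> ideals alpha t" "K = insert x J" "x \<in> F" "x \<notin> J"
  shows "(if 2 \<le> x then Dl b cq K J (x - 1) else 0) + Dl b cq K J x
   + (if x < n then Dl b cq K J (x + 1) else 0) = 0"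
  unfolding assms(3) by (rule ev[OF assms(1) _ assms(4,5)]) (use assms(2,3) in simp)


lemma chain: assumes "1 \<le> i" "i \<le> t" "1 \<le> j" "j < alpha i"
  shows "b (pp i j) + 2 * cq (pp i j) =
    (if 2 \<le> j then b (pp i (j - 1)) + cq (pp i (j - 1)) else 0)
    + (if j + 2 \<le> alpha i then cq (pp i (j + 1)) else 0)"
proof (cases "odd i")
  case True
  then show ?thesis using chain_odd[OF True assms] assms by (simp add: pp_def)
next
  case False
  have "a (i - 1) + alpha i = a i" using a_prev assms by simp
  then have "a i - (j - 1) = a i - j + 1" "a i - (j + 1) = a i - j - 1" using assms by auto
  then show ?thesis using chain_even[of i j] False assms by (simp add: pp_def)
qed

end

lemma chain_alg:
  fixes B C :: "nat \<Rightarrow> real"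
  assumes A: "2 \<le> al" and H: "\<And>j. 1 \<le> j \<Longrightarrow> j < al \<Longrightarrow> B j + 2 * C j =
    (if 2 \<le> j then B (j - 1) + C (j - 1) else 0) + (if j + 2 \<le> al then C (j + 1) else 0)"
  shows "(\<Sum>j=1..al - 1. B j) = - (real al * C 1) \<and> B (al - 1) + C (al - 1) = - C 1"
proof -
  have P: "B k + C k - (if k + 2 \<le> al then C (k + 1) else 0) = - C 1 \<and>
      (\<Sum>j=1..k. B j) = - (real (k + 1) * C 1) + (if k + 2 \<le> al then C (k + 1) else 0)"
    if "1 \<le> k" "k < al" for k
    using that
  proof (induction k)
    case 0 then show ?case by simp
  next
    case (Suc k)
    show ?case
    proof (cases "k = 0")
      case True
      then show ?thesis using H[of 1] Suc.prems by (auto simp: algebra_simps)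
    next
      case False
      then have IH: "B k + C k - C (k + 1) = - C 1 \<and>
          (\<Sum>j=1..k. B j) = - (real (k + 1) * C 1) + C (k + 1)"
        using Suc by auto
      have h: "B (Suc k) + 2 * C (Suc k) = B k + C k + (if Suc k + 2 \<le> al then C (Suc k + 1) else 0)"
        using H[of "Suc k"] Suc.prems False by simp
      show ?thesis using IH h by (auto simp: algebra_simps)
    qed
  qed
  have "1 \<le> al - 1" "al - 1 < al" using A by auto
  from P[OF this] show ?thesis using A by (simp add: algebra_simps of_nat_diff)
qed

context fctx begin

lemma ideal_Un: "I \<in> ideals alpha t \<Longrightarrow> J \<in> ideals alpha t \<Longrightarrow> I \<union> J \<in> ideals alpha t"
  unfolding ideal_iff by blast

lemma ideal_empty: "{} \<in> ideals alpha t" unfolding ideal_iff by blast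
lemma ideal_F: "F \<in> ideals alpha t" unfolding ideal_iff using fcover_F by blast

lemma interval_ideal: assumes "1 \<le> p" "q \<le> n" "2 \<le> p \<Longrightarrow> p \<le> q \<Longrightarrow> \<not> upe (p - 1)"
   "p \<le> q \<Longrightarrow> q < n \<Longrightarrow> upe q"
  shows "{p..q} \<in> ideals alpha t"
  unfolding ideal_iff2
proof (intro conjI allI impI)
  show "{p..q} \<subseteq> F" using assms(1,2) by (auto simp: F_def')
  fix j assume j: "1 \<le> j" "j < n"
  show "j + 1 \<in> {p..q} \<Longrightarrow> j \<in> {p..q}" if "upe j"
    using that assms(3) j by (cases "j + 1 = p") auto
  show "j \<in> {p..q} \<Longrightarrow> j + 1 \<in> {p..q}" if "\<not> upe j"
    using that assms(4) j by (cases "j = q") auto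
qed

lemma remove_max_ideal: assumes "s \<in> F" "s < n \<Longrightarrow> \<not> upe s" "2 \<le> s \<Longrightarrow> upe (s - 1)"
  shows "F - {s} \<in> ideals alpha t"
  unfolding ideal_iff2
proof (intro conjI allI impI)
  show "F - {s} \<subseteq> F" by blast
  fix j assume j: "1 \<le> j" "j < n"
  show "j + 1 \<in> F - {s} \<Longrightarrow> j \<in> F - {s}" if "upe j"
    using that assms(2) j by (cases "j = s") (auto simp: F_def')
  show "j \<in> F - {s} \<Longrightarrow> j + 1 \<in> F - {s}" if "\<not> upe j"
    using that assms(3) j by (cases "j + 1 = s") (auto simp: F_def')
qed

end

context fw begin

lemma max_top: assumes i: "odd i" "1 \<le> i" "i < t"
  shows "b (a i) + 2 * cq (a i) = (if 2 \<le> alpha i then b (a i - 1) + cq (a i - 1) else 0)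
     + (if 2 \<le> alpha (i + 1) then b (a i + 1) + cq (a i + 1) else 0)"
proof -
  define s where "s = a i"
  have ai: "a (i - 1) + alpha i = a i" using a_prev i by simp
  have ai1: "a i + alpha (i + 1) = a (i + 1)" using a_Suc[of i] by simp
  have ap: "alpha i > 0" "alpha (i + 1) > 0" using i by (auto intro!: apos')
  have sn: "s < n" "2 \<le> s" using a_lt_n[of i] a1_ge2[of i] i s_def by auto
  have sF: "s \<in> F" using sn by (simp add: F_def')
  have us: "\<not> upe s" using upe_at[of i] i s_def by simp
  have us1: "upe (s - 1)" using upe_odd[of i "s - 1"] i s_def ai ap by simp
  have J: "F - {s} \<in> ideals alpha t" by (rule remove_max_ideal) (use sF us us1 in auto)
  have E: "(if 2 \<le> s then Dl b cq F (F - {s}) (s - 1) else 0) + Dl b cq F (F - {s}) s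
   + (if s < n then Dl b cq F (F - {s}) (s + 1) else 0) = 0"
    by (rule ev'[OF J ideal_F _ sF]) (use sF in auto)
  have D0: "Dl b cq F (F - {s}) s = b s + 2 * cq s"
    unfolding Dl_def chi_pos[OF J sF] chi_pos[OF ideal_F sF] toggle_pos[OF J sF] toggle_pos[OF ideal_F sF]
    using us us1 sF sn by (auto simp: F_def')
  have D1: "Dl b cq F (F - {s}) (s - 1) = (if 2 \<le> alpha i then - (b (s - 1) + cq (s - 1)) else 0)"
  proof -
    have F1: "s - 1 \<in> F" using sn by (auto simp: F_def')
    have u2: "2 \<le> s - 1 \<and> \<not> upe (s - 1 - 1) \<longleftrightarrow> \<not> 2 \<le> alpha i"
    proof (cases "2 \<le> alpha i")
      case True then show ?thesis using upe_odd[of i "s - 1 - 1"] i s_def ai by simp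
    next
      case False
      then have "s - 1 = a (i - 1)" using s_def ai ap by simp
      moreover have "i \<noteq> 1" using False a1 by auto
      then have "2 \<le> i" using i by simp
      moreover have "upe (a (i - 1) - 1) \<longleftrightarrow> even i" using \<open>2 \<le> i\<close> i by (intro upe_prev) auto
      moreover have "a (i - 1) \<ge> 2" using \<open>2 \<le> i\<close> by (intro a1_ge2) auto
      ultimately show ?thesis using False i by simp
    qed
    show ?thesis
      unfolding Dl_def chi_pos[OF J F1] chi_pos[OF ideal_F F1] toggle_pos[OF J F1] toggle_pos[OF ideal_F F1]
      using us us1 u2 sn F1 by (auto simp: F_def')
  qed
  have D2: "Dl b cq F (F - {s}) (s + 1) = (if 2 \<le> alpha (i + 1) then - (b (s + 1) + cq (s + 1)) else 0)"
  proof -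
    have F1: "s + 1 \<in> F" using sn by (auto simp: F_def')
    have u2: "s + 1 < n \<and> upe (s + 1) \<longleftrightarrow> \<not> 2 \<le> alpha (i + 1)"
    proof (cases "2 \<le> alpha (i + 1)")
      case True then show ?thesis using upe_even[of "i + 1" "s + 1"] i s_def ai1 by simp
    next
      case False
      then have "s + 1 = a (i + 1)" using s_def ai1 ap by simp
      moreover have "i + 1 \<noteq> t" using False at by auto
      then have "i + 1 < t" using i by simp
      moreover have "upe (a (i + 1)) \<longleftrightarrow> even (i + 1)" using \<open>i + 1 < t\<close> by (intro upe_at) auto
      moreover have "a (i + 1) < n" using \<open>i + 1 < t\<close> by (intro a_lt_n) auto
      ultimately show ?thesis using False i by simp
    qed
    have sn2: "s + 1 < n \<Longrightarrow> s + 2 \<in> F" by (auto simp: F_def')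
    show ?thesis
      unfolding Dl_def chi_pos[OF J F1] chi_pos[OF ideal_F F1] toggle_pos[OF J F1] toggle_pos[OF ideal_F F1]
      using us us1 u2 sn F1 sn2 by (auto simp: F_def')
  qed
  show ?thesis using E D0 D1 D2 sn unfolding s_def[symmetric] by (auto split: if_splits)
qed


lemma R1: assumes i: "odd i" "1 \<le> i" "i < t"
  shows "cq (a i) = 0"
proof -
  define s where "s = a i"
  define lo where "lo = max 1 (a (i - 1))"
  define W where "W = {s + 1..min (a (i + 1)) n}"
  have ai: "a (i - 1) + alpha i = a i" using a_prev i by simp
  have ai1: "a i + alpha (i + 1) = a (i + 1)" using a_Suc[of i] by simp
  have ap: "alpha i > 0" "alpha (i + 1) > 0" using i by (auto intro!: apos')
  have sn: "s < n" "2 \<le> s" using a_lt_n[of i] a1_ge2[of i] i s_def by auto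
  have sF: "s \<in> F" using sn by (simp add: F_def')
  have us: "\<not> upe s" using upe_at[of i] i s_def by simp
  have up: "\<And>y. a (i - 1) \<le> y \<Longrightarrow> y < s \<Longrightarrow> upe y" using upe_odd[of i] i s_def by blast
  have lo: "lo \<le> s - 1" "1 \<le> lo" "a (i - 1) \<le> lo" using s_def ai ap sn lo_def by auto
  have lo2: "2 \<le> lo \<Longrightarrow> \<not> upe (lo - 1)"
  proof -
    assume "2 \<le> lo"
    then have "lo = a (i - 1)" "i \<noteq> 1" using lo_def by auto
    then have "2 \<le> i" using i by simp
    then have "upe (a (i - 1) - 1) \<longleftrightarrow> even i" using i by (intro upe_prev) auto
    then show "\<not> upe (lo - 1)" using \<open>lo = a (i - 1)\<close> i by simp
  qed
  have J1: "{lo..s - 2} \<in> ideals alpha t"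
    by (rule interval_ideal) (use lo lo2 up sn in auto)
  have K1: "{lo..s - 1} \<in> ideals alpha t"
    by (rule interval_ideal) (use lo lo2 up sn in auto)
  have Wi: "W \<in> ideals alpha t" unfolding W_def
  proof (rule interval_ideal)
    show "\<not> upe (s + 1 - 1)" using us by simp
    assume "s + 1 \<le> min (a (i + 1)) n" "min (a (i + 1)) n < n"
    then have "a (i + 1) < n" by simp
    then have "i + 1 < t" using a_t i by (cases "i + 1 = t") auto
    then have "upe (a (i + 1)) \<longleftrightarrow> even (i + 1)" by (intro upe_at) auto
    then show "upe (min (a (i + 1)) n)" using i \<open>a (i + 1) < n\<close> by simp
  qed auto
  have Ws: "s + 1 \<in> W" "\<And>p. p \<in> W \<Longrightarrow> s + 1 \<le> p" using sn ai1 ap s_def by (auto simp: W_def)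
  have J2: "{lo..s - 2} \<union> W \<in> ideals alpha t" by (rule ideal_Un[OF J1 Wi])
  have K2: "{lo..s - 1} \<union> W \<in> ideals alpha t" by (rule ideal_Un[OF K1 Wi])
  have xF: "s - 1 \<in> F" using sn by (auto simp: F_def')
  have e1: "{lo..s - 1} = insert (s - 1) {lo..s - 2}" using lo sn by auto
  have e2: "{lo..s - 1} \<union> W = insert (s - 1) ({lo..s - 2} \<union> W)" using e1 by auto
  have xn1: "s - 1 \<notin> {lo..s - 2}" using sn by auto
  have xn2: "s - 1 \<notin> {lo..s - 2} \<union> W" using sn Ws by force
  note E1 = ev'[OF J1 K1 e1 xF xn1]
  note E2 = ev'[OF J2 K2 e2 xF xn2]
  have agree: "p \<in> {lo..s - 1} \<longleftrightarrow> p \<in> {lo..s - 1} \<union> W" "p \<in> {lo..s - 2} \<longleftrightarrow> p \<in> {lo..s - 2} \<union> W"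
    if "p \<le> s" for p using that Ws by force+
  have S1: "Dl b cq {lo..s - 1} {lo..s - 2} (s - 1) = Dl b cq ({lo..s - 1} \<union> W) ({lo..s - 2} \<union> W) (s - 1)"
    by (rule Dl_same[OF K1 J1 K2 J2 xF]) (use agree sn in auto)
  have S2: "2 \<le> s - 1 \<Longrightarrow> Dl b cq {lo..s - 1} {lo..s - 2} (s - 1 - 1) = Dl b cq ({lo..s - 1} \<union> W) ({lo..s - 2} \<union> W) (s - 1 - 1)"
    by (rule Dl_same[OF K1 J1 K2 J2]) (use agree sn in \<open>auto simp: F_def'\<close>)
  have sx: "s - 1 + 1 = s" using sn by simp
  have usm1: "upe (s - 1)" using up lo sn by simp
  have sW: "s \<notin> W" "s - 1 \<notin> W" using Ws(2) by force+
  have T1: "Dl b cq {lo..s - 1} {lo..s - 2} s = 0"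
    unfolding Dl_def chi_pos[OF J1 sF] chi_pos[OF K1 sF] toggle_pos[OF J1 sF] toggle_pos[OF K1 sF]
    using us sn by auto
  have T2: "Dl b cq ({lo..s - 1} \<union> W) ({lo..s - 2} \<union> W) s = - cq s"
    unfolding Dl_def chi_pos[OF J2 sF] chi_pos[OF K2 sF] toggle_pos[OF J2 sF] toggle_pos[OF K2 sF]
    using us sn Ws(1) lo usm1 sW by auto
  have "s - 1 < n" using sn by simp
  then show ?thesis using E1 E2 S1 S2 T1 T2 unfolding sx s_def[symmetric]
    by (auto split: if_splits)
qed


lemma min_bot: assumes i: "even i" "1 \<le> i" "i < t"
  shows "b (a i) + 2 * cq (a i) = (if 2 \<le> alpha i then cq (a i - 1) else 0)
     + (if 2 \<le> alpha (i + 1) then cq (a i + 1) else 0)"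
proof -
  define s where "s = a i"
  have ai: "a (i - 1) + alpha i = a i" using a_prev i by simp
  have ai1: "a i + alpha (i + 1) = a (i + 1)" using a_Suc[of i] by simp
  have ap: "alpha i > 0" "alpha (i + 1) > 0" using i by (auto intro!: apos')
  have i2: "2 \<le> i" using i by presburger
  have sn: "s < n" "3 \<le> s" using a_lt_n[of i] a1_ge2[of "i - 1"] i2 ai ap i diff_le_mono[OF i2, of 1] s_def by auto
  have sF: "s \<in> F" using sn by (simp add: F_def')
  have us: "upe s" using upe_at[of i] i s_def by simp
  have us1: "\<not> upe (s - 1)" using upe_even[of i "s - 1"] i s_def ai ap by simp
  have K: "{s..s} \<in> ideals alpha t" by (rule interval_ideal) (use us us1 sn in auto)
  have E: "(if 2 \<le> s then Dl b cq {s..s} {} (s - 1) else 0) + Dl b cq {s..s} {} s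
   + (if s < n then Dl b cq {s..s} {} (s + 1) else 0) = 0"
    by (rule ev'[OF ideal_empty K _ sF]) auto
  have D0: "Dl b cq {s..s} {} s = b s + 2 * cq s"
    unfolding Dl_def chi_pos[OF ideal_empty sF] chi_pos[OF K sF] toggle_pos[OF ideal_empty sF] toggle_pos[OF K sF]
    using us us1 sF sn by auto
  have D1: "Dl b cq {s..s} {} (s - 1) = (if 2 \<le> alpha i then - cq (s - 1) else 0)"
  proof -
    have F1: "s - 1 \<in> F" using sn by (auto simp: F_def')
    have u2: "upe (s - 1 - 1) \<longleftrightarrow> \<not> 2 \<le> alpha i"
    proof (cases "2 \<le> alpha i")
      case True then show ?thesis using upe_even[of i "s - 1 - 1"] i s_def ai by simp
    next
      case False
      then have "s - 1 = a (i - 1)" using s_def ai ap by simp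
      moreover have "upe (a (i - 1) - 1) \<longleftrightarrow> even i" using i2 i by (intro upe_prev) auto
      ultimately show ?thesis using False i by simp
    qed
    show ?thesis
      unfolding Dl_def chi_pos[OF ideal_empty F1] chi_pos[OF K F1] toggle_pos[OF ideal_empty F1] toggle_pos[OF K F1]
      using us us1 u2 sn F1 by auto
  qed
  have D2: "Dl b cq {s..s} {} (s + 1) = (if 2 \<le> alpha (i + 1) then - cq (s + 1) else 0)"
  proof -
    have F1: "s + 1 \<in> F" using sn by (auto simp: F_def')
    have u2: "s + 1 < n \<and> \<not> upe (s + 1) \<longleftrightarrow> \<not> 2 \<le> alpha (i + 1)"
    proof (cases "2 \<le> alpha (i + 1)")
      case True then show ?thesis using upe_odd[of "i + 1" "s + 1"] i s_def ai1 by simp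
    next
      case False
      then have "s + 1 = a (i + 1)" using s_def ai1 ap by simp
      moreover have "i + 1 \<noteq> t" using False at by auto
      then have "i + 1 < t" using i by simp
      moreover have "upe (a (i + 1)) \<longleftrightarrow> even (i + 1)" using \<open>i + 1 < t\<close> by (intro upe_at) auto
      moreover have "a (i + 1) < n" using \<open>i + 1 < t\<close> by (intro a_lt_n) auto
      ultimately show ?thesis using False i by simp
    qed
    show ?thesis
      unfolding Dl_def chi_pos[OF ideal_empty F1] chi_pos[OF K F1] toggle_pos[OF ideal_empty F1] toggle_pos[OF K F1]
      using us us1 u2 sn F1 by auto
  qed
  show ?thesis using E D0 D1 D2 sn unfolding s_def[symmetric] by (auto split: if_splits)
qed

lemma R2_core: assumes i: "even i" "1 \<le> i" "i < t" and s: "s = a i"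
  and ids: "J1 \<in> ideals alpha t" "K1 \<in> ideals alpha t" "J2 \<in> ideals alpha t" "K2 \<in> ideals alpha t"
  and ins: "K1 = insert (s - 1) J1" "K2 = insert (s - 1) J2" "s - 1 \<notin> J1" "s - 1 \<notin> J2"
  and agree: "\<And>p. p \<le> s \<Longrightarrow> (p \<in> J1 \<longleftrightarrow> p \<in> J2) \<and> (p \<in> K1 \<longleftrightarrow> p \<in> K2)"
  and m: "s \<in> J1" "s + 1 \<notin> J1" "s + 1 \<in> J2"
  shows "b s + cq s = 0"
proof -
  have ai: "a (i - 1) + alpha i = a i" using a_prev i by simp
  have ap: "alpha i > 0" using i by (auto intro!: apos')
  have i2: "2 \<le> i" using i by presburger
  have sn: "s < n" "3 \<le> s" using a_lt_n[of i] a1_ge2[of "i - 1"] i2 ai ap i diff_le_mono[OF i2, of 1] s by auto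
  have sF: "s \<in> F" using sn by (simp add: F_def')
  have xF: "s - 1 \<in> F" using sn by (auto simp: F_def')
  have us: "upe s" using upe_at[of i] i s by simp
  have us1: "\<not> upe (s - 1)" using upe_even[of i "s - 1"] i s ai ap by simp
  note E1 = ev'[OF ids(1,2) ins(1) xF ins(3)]
  note E2 = ev'[OF ids(3,4) ins(2) xF ins(4)]
  have S1: "Dl b cq K1 J1 (s - 1) = Dl b cq K2 J2 (s - 1)"
    by (rule Dl_same[OF ids(2,1,4,3) xF]) (use agree sn in auto)
  have S2: "Dl b cq K1 J1 (s - 1 - 1) = Dl b cq K2 J2 (s - 1 - 1)"
    by (rule Dl_same[OF ids(2,1,4,3)]) (use agree sn in \<open>auto simp: F_def'\<close>)
  have sx: "s - 1 + 1 = s" using sn by simp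
  have mm: "s \<in> K1" "s \<in> J2" "s \<in> K2" "s + 1 \<in> K2" "s - 1 \<in> K1" "s - 1 \<in> K2" "s + 1 \<notin> K1"
    using m ins agree[of s] sn by auto
  have T1: "Dl b cq K1 J1 s = - b s - cq s"
    unfolding Dl_def chi_pos[OF ids(1) sF] chi_pos[OF ids(2) sF] toggle_pos[OF ids(1) sF] toggle_pos[OF ids(2) sF]
    using us us1 sn m mm ins by auto
  have T2: "Dl b cq K2 J2 s = 0"
    unfolding Dl_def chi_pos[OF ids(3) sF] chi_pos[OF ids(4) sF] toggle_pos[OF ids(3) sF] toggle_pos[OF ids(4) sF]
    using us us1 sn m mm by auto
  have "s - 1 < n" "2 \<le> s - 1" using sn by auto
  then show ?thesis using E1 E2 S1 S2 T1 T2 unfolding sx by (auto split: if_splits)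
qed

lemma R2: assumes i: "even i" "1 \<le> i" "i < t"
  shows "b (a i) + cq (a i) = 0"
proof -
  define s where "s = a i"
  have ai: "a (i - 1) + alpha i = a i" using a_prev i by simp
  have ap: "alpha i > 0" using i by (auto intro!: apos')
  have i2: "2 \<le> i" using i by presburger
  have sn: "s < n" "3 \<le> s" using a_lt_n[of i] a1_ge2[of "i - 1"] i2 ai ap i diff_le_mono[OF i2, of 1] s_def by auto
  have us: "upe s" using upe_at[of i] i s_def by simp
  have us1: "\<not> upe (s - 1)" using upe_even[of i "s - 1"] i s_def ai ap by simp
  show ?thesis
  proof (cases "2 \<le> alpha i")
    case True
    have us2: "\<not> upe (s - 1 - 1)" using upe_even[of i "s - 1 - 1"] i s_def ai True by simp
    have J1: "{s..s} \<in> ideals alpha t" by (rule interval_ideal) (use us us1 sn in auto)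
    have K1: "{s - 1..s} \<in> ideals alpha t" by (rule interval_ideal) (use us us2 sn in auto)
    have J2: "{s..n} \<in> ideals alpha t" by (rule interval_ideal) (use us us1 sn in auto)
    have K2: "{s - 1..n} \<in> ideals alpha t" by (rule interval_ideal) (use us us2 sn in auto)
    show ?thesis unfolding s_def[symmetric]
      by (rule R2_core[OF i s_def J1 K1 J2 K2]) (use sn in auto)
  next
    case False
    then have "s - 1 = a (i - 1)" using s_def ai ap by simp
    moreover have "upe (a (i - 1) - 1) \<longleftrightarrow> even i" using i2 i by (intro upe_prev) auto
    ultimately have us2: "upe (s - 1 - 1)" using i by simp
    have "s - 1 - 1 = s - 2" by simp
    then have us2': "upe (s - 2)" using us2 by simp
    have P: "{1..s - 2} \<in> ideals alpha t" by (rule interval_ideal) (use us2' sn in auto)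
    have S: "{s..s} \<in> ideals alpha t" by (rule interval_ideal) (use us us1 sn in auto)
    have Sn: "{s..n} \<in> ideals alpha t" by (rule interval_ideal) (use us us1 sn in auto)
    have J1: "{1..s - 2} \<union> {s..s} \<in> ideals alpha t" by (rule ideal_Un[OF P S])
    have K1: "{1..s} \<in> ideals alpha t" by (rule interval_ideal) (use us sn in auto)
    have J2: "{1..s - 2} \<union> {s..n} \<in> ideals alpha t" by (rule ideal_Un[OF P Sn])
    have K2: "{1..n} \<in> ideals alpha t" by (rule interval_ideal) (use us sn in auto)
    show ?thesis unfolding s_def[symmetric]
      by (rule R2_core[OF i s_def J1 K1 J2 K2]) (use sn in auto)
  qed
qed


end

context fctx begin

lemma pp_reindex: assumes "1 \<le> i" "i \<le> t"
  shows "(\<Sum>j=1..alpha i - 1. g (pp i j)) = (\<Sum>x\<in>{a (i - 1) + 1..<a i}. g x)"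
proof -
  have ai: "a (i - 1) + alpha i = a i" using a_prev assms by simp
  show ?thesis
  proof (cases "odd i")
    case True
    show ?thesis
      by (rule sum.reindex_bij_witness[where i = "\<lambda>x. x - a (i - 1)" and j = "\<lambda>j. a (i - 1) + j"])
         (use True ai in \<open>auto simp: pp_def\<close>)
  next
    case False
    show ?thesis
      by (rule sum.reindex_bij_witness[where i = "\<lambda>x. a i - x" and j = "\<lambda>j. a i - j"])
         (use False ai in \<open>auto simp: pp_def\<close>)
  qed
qed

definition sigma :: "(nat \<Rightarrow> real) \<Rightarrow> nat \<Rightarrow> real" where
  "sigma b i = (\<Sum>x\<in>{a (i - 1) + 1..<a i}. b x) / real (alpha i)"

lemma sigma1: assumes "1 \<le> i" "i \<le> t" "alpha i < 2" shows "sigma b i = 0"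
proof -
  have "alpha i > 0" using assms by (intro apos') auto
  then have "a i = a (i - 1) + 1" using a_prev[of i] assms by simp
  then show ?thesis by (simp add: sigma_def)
qed

end

context fw begin

lemma sigma_chain: assumes "1 \<le> i" "i \<le> t" "2 \<le> alpha i"
  shows "sigma b i = - cq (pp i 1) \<and> b (pp i (alpha i - 1)) + cq (pp i (alpha i - 1)) = sigma b i"
proof -
  have "(\<Sum>j=1..alpha i - 1. b (pp i j)) = - (real (alpha i) * cq (pp i 1)) \<and>
     b (pp i (alpha i - 1)) + cq (pp i (alpha i - 1)) = - cq (pp i 1)"
    by (rule chain_alg[where B = "\<lambda>j. b (pp i j)" and C = "\<lambda>j. cq (pp i j)", OF assms(3)])
       (rule chain[OF assms(1,2)], auto)
  moreover have "(\<Sum>j=1..alpha i - 1. b (pp i j)) = (\<Sum>x\<in>{a (i - 1) + 1..<a i}. b x)"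
    by (rule pp_reindex[OF assms(1,2)])
  ultimately have h: "(\<Sum>x\<in>{a (i - 1) + 1..<a i}. b x) = - (real (alpha i) * cq (pp i 1))"
    and h2: "b (pp i (alpha i - 1)) + cq (pp i (alpha i - 1)) = - cq (pp i 1)" by auto
  have "real (alpha i) \<noteq> 0" using assms(3) by simp
  then have "sigma b i = - cq (pp i 1)" unfolding sigma_def h by simp
  then show ?thesis using h2 by simp
qed

lemma constraint: assumes i: "1 \<le> i" "i < t"
  shows "b (a i) = sigma b i + sigma b (i + 1)"
proof -
  have ai: "a (i - 1) + alpha i = a i" using a_prev i by simp
  have ai1: "a i + alpha (i + 1) = a (i + 1)" using a_Suc[of i] by simp
  show ?thesis
  proof (cases "odd i")
    case True
    have m: "b (a i) + 2 * cq (a i) = (if 2 \<le> alpha i then b (a i - 1) + cq (a i - 1) else 0)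
     + (if 2 \<le> alpha (i + 1) then b (a i + 1) + cq (a i + 1) else 0)" by (rule max_top[OF True i])
    have r: "cq (a i) = 0" by (rule R1[OF True i])
    have s1: "(if 2 \<le> alpha i then b (a i - 1) + cq (a i - 1) else 0) = sigma b i"
    proof (cases "2 \<le> alpha i")
      case True
      have "pp i (alpha i - 1) = a i - 1" using \<open>odd i\<close> ai True by (simp add: pp_def)
      then show ?thesis using sigma_chain[of i] True i by simp
    next
      case False then show ?thesis using sigma1[of i] i by simp
    qed
    have s2: "(if 2 \<le> alpha (i + 1) then b (a i + 1) + cq (a i + 1) else 0) = sigma b (i + 1)"
    proof (cases "2 \<le> alpha (i + 1)")
      case True
      have "pp (i + 1) (alpha (i + 1) - 1) = a i + 1" using \<open>odd i\<close> ai1 True by (simp add: pp_def)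
      then show ?thesis using sigma_chain[of "i + 1"] True i by simp
    next
      case False then show ?thesis using sigma1[of "i + 1"] i by simp
    qed
    show ?thesis using m r s1 s2 by simp
  next
    case False
    have m: "b (a i) + 2 * cq (a i) = (if 2 \<le> alpha i then cq (a i - 1) else 0)
     + (if 2 \<le> alpha (i + 1) then cq (a i + 1) else 0)" by (rule min_bot[OF _ i]) (use False in simp)
    have r: "b (a i) + cq (a i) = 0" by (rule R2[OF _ i]) (use False in simp)
    have s1: "(if 2 \<le> alpha i then cq (a i - 1) else 0) = - sigma b i"
    proof (cases "2 \<le> alpha i")
      case True
      have "pp i 1 = a i - 1" using \<open>\<not> odd i\<close> by (simp add: pp_def)
      then show ?thesis using sigma_chain[of i] True i by simp
    next
      case False then show ?thesis using sigma1[of i] i by simp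
    qed
    have s2: "(if 2 \<le> alpha (i + 1) then cq (a i + 1) else 0) = - sigma b (i + 1)"
    proof (cases "2 \<le> alpha (i + 1)")
      case True
      have "pp (i + 1) 1 = a i + 1" using \<open>\<not> odd i\<close> by (simp add: pp_def)
      then show ?thesis using sigma_chain[of "i + 1"] True i by simp
    next
      case False then show ?thesis using sigma1[of "i + 1"] i by simp
    qed
    show ?thesis using m r s1 s2 by simp
  qed
qed

end

lemma sbp:
  fixes M :: "nat \<Rightarrow> real"
  assumes "1 \<le> K"
  shows "(\<Sum>j=1..K. (- real j + (if m < j then A else 0)) * (M (j - 1) - 2 * M j + M (j + 1)))
    = real K * (M K - M (K + 1)) + M K - M 0
      + (if m \<le> K then A * ((M (K + 1) - M K) - (M (m + 1) - M m)) else 0)"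
  using assms
proof (induction K)
  case 0 then show ?case by simp
next
  case (Suc K)
  show ?case
  proof (cases "K = 0")
    case True
    then show ?thesis by (cases "m = 0"; cases "m = 1") (auto simp: algebra_simps)
  next
    case False
    then have IH: "(\<Sum>j=1..K. (- real j + (if m < j then A else 0)) * (M (j - 1) - 2 * M j + M (j + 1)))
    = real K * (M K - M (K + 1)) + M K - M 0
      + (if m \<le> K then A * ((M (K + 1) - M K) - (M (m + 1) - M m)) else 0)" using Suc by simp
    show ?thesis
      using IH by (cases "m \<le> K"; cases "m = Suc K") (auto simp: algebra_simps)
  qed
qed

context fctx begin

definition Mm :: "nat set \<Rightarrow> nat \<Rightarrow> nat \<Rightarrow> real" where
  "Mm I i j = (if pp i j \<in> F then (if pp i j \<in> I then 1 else 0) else (if j = 0 then 1 else 0))"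

lemma ideal_sub: "I \<in> ideals alpha t \<Longrightarrow> I \<subseteq> F" unfolding ideal_iff by blast

lemma ideal_up: "I \<in> ideals alpha t \<Longrightarrow> 1 \<le> q \<Longrightarrow> q < n \<Longrightarrow> upe q \<Longrightarrow> q + 1 \<in> I \<Longrightarrow> q \<in> I"
  unfolding ideal_iff2 by blast
lemma ideal_dn: "I \<in> ideals alpha t \<Longrightarrow> 1 \<le> q \<Longrightarrow> q < n \<Longrightarrow> \<not> upe q \<Longrightarrow> q \<in> I \<Longrightarrow> q + 1 \<in> I"
  unfolding ideal_iff2 by blast

lemma interior: assumes I: "I \<in> ideals alpha t" and i: "1 \<le> i" "i \<le> t" and j: "1 \<le> j" "j < alpha i"
  shows "pp i j \<in> F \<and> chi alpha t (pp i j) I = Mm I i j - Mm I i (j + 1) \<and>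
     toggle alpha t (pp i j) I = Mm I i (j - 1) - 2 * Mm I i j + Mm I i (j + 1)"
proof -
  have ai: "a (i - 1) + alpha i = a i" using a_prev i by simp
  have ait: "a i \<le> n + 1" using a_t fa_mono[of i t alpha] i by simp
  have sub: "I \<subseteq> F" by (rule ideal_sub[OF I])
  show ?thesis
  proof (cases "odd i")
    case True
    define q where "q = a (i - 1) + j"
    have pq: "pp i j = q" "pp i (j + 1) = q + 1" "pp i (j - 1) = q - 1" using True j by (auto simp: pp_def q_def)
    have qF: "q \<in> F" using q_def j ai ait by (auto simp: F_def')
    have u: "upe q" "upe (q - 1)" using upe_odd[of i] True i q_def ai j by auto
    have q1: "q - 1 \<in> F \<longleftrightarrow> 2 \<le> q" "q + 1 \<in> F \<longleftrightarrow> q < n" "q - 1 \<notin> F \<Longrightarrow> j - 1 = 0"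
      using qF q_def by (auto simp: F_def')
    have c1: "q < n \<Longrightarrow> q + 1 \<in> I \<Longrightarrow> q \<in> I" using ideal_up[OF I, of q] u qF by (auto simp: F_def')
    have c2: "2 \<le> q \<Longrightarrow> q \<in> I \<Longrightarrow> q - 1 \<in> I" using ideal_up[OF I, of "q - 1"] u qF by (auto simp: F_def')
    have nF: "\<not> q < n \<Longrightarrow> q + 1 \<notin> I" using sub q1 by blast
    show ?thesis unfolding pq chi_pos[OF I qF] toggle_pos[OF I qF] Mm_def
      using qF u q1 c1 c2 nF j by auto
  next
    case False
    define q where "q = a i - j"
    have i2: "2 \<le> i" using False i by presburger
    have ag: "a (i - 1) \<ge> 2" using i2 by (intro a1_ge2) auto
    have pq: "pp i j = q" "pp i (j + 1) = q - 1" "pp i (j - 1) = q + 1" using False j ai by (auto simp: pp_def q_def)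
    have qF: "q \<in> F" "3 \<le> q" using q_def j ai ait ag by (auto simp: F_def')
    have u: "\<not> upe q" "\<not> upe (q - 1)" using upe_even[of i] False i q_def ai j by auto
    have q1: "q - 1 \<in> F" "q + 1 \<in> F \<longleftrightarrow> q < n" "q + 1 \<notin> F \<Longrightarrow> j - 1 = 0"
      using qF q_def ai ait j by (auto simp: F_def')
    have c1: "q < n \<Longrightarrow> q \<in> I \<Longrightarrow> q + 1 \<in> I" using ideal_dn[OF I, of q] u qF by (auto simp: F_def')
    have c2: "q - 1 \<in> I \<Longrightarrow> q \<in> I" using ideal_dn[OF I, of "q - 1"] u qF by (auto simp: F_def')
    have nF: "\<not> q < n \<Longrightarrow> q + 1 \<notin> I" using sub q1 by blast
    show ?thesis unfolding pq chi_pos[OF I qF(1)] toggle_pos[OF I qF(1)] Mm_def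
      using qF u q1 c1 c2 nF j by auto
  qed
qed

lemma min_tog: assumes I: "I \<in> ideals alpha t" and q: "q \<in> F" "q < n \<Longrightarrow> upe q" "2 \<le> q \<Longrightarrow> \<not> upe (q - 1)"
  shows "toggle alpha t q I = (if q \<in> I then 0 else 1) - chi alpha t q I"
  unfolding chi_pos[OF I q(1)] toggle_pos[OF I q(1)] using q by auto

lemma max_chi: assumes I: "I \<in> ideals alpha t" and q: "q \<in> F" "q < n \<Longrightarrow> \<not> upe q" "2 \<le> q \<Longrightarrow> upe (q - 1)"
  shows "chi alpha t q I = (if q \<in> I then 1 else 0)"
  unfolding chi_pos[OF I q(1)] using q by auto

lemma bottom: assumes I: "I \<in> ideals alpha t" and i: "1 \<le> i" "i \<le> t" and F0: "pp i 0 \<in> F"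
  shows "toggle alpha t (pp i 0) I = 1 - Mm I i 0 - chi alpha t (pp i 0) I"
proof -
  have "toggle alpha t (pp i 0) I = (if pp i 0 \<in> I then 0 else 1) - chi alpha t (pp i 0) I"
  proof (rule min_tog[OF I F0])
    show "pp i 0 < n \<Longrightarrow> upe (pp i 0)"
    proof (cases "odd i")
      case True
      then show ?thesis using upe_odd[of i "a (i - 1)"] a_lt[of i] i by (simp add: pp_def)
    next
      case False
      then have "pp i 0 = a i" by (simp add: pp_def)
      moreover assume "pp i 0 < n"
      ultimately have "i < t" using a_t i by (cases "i = t") auto
      then show ?thesis using upe_at[of i] False i \<open>pp i 0 = a i\<close> by simp
    qed
    show "2 \<le> pp i 0 \<Longrightarrow> \<not> upe (pp i 0 - 1)"
    proof (cases "odd i")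
      case True
      assume "2 \<le> pp i 0"
      then have "i \<noteq> 1" using True by (auto simp: pp_def)
      then show ?thesis using upe_prev[of i] True i by (simp add: pp_def)
    next
      case False
      have "a (i - 1) + alpha i = a i" "alpha i > 0" using a_prev[of i] apos'[of i] i by auto
      then show ?thesis using upe_even[of i "a i - 1"] False i by (simp add: pp_def)
    qed
  qed
  then show ?thesis using F0 by (simp add: Mm_def)
qed

lemma top: assumes I: "I \<in> ideals alpha t" and i: "1 \<le> i" "i \<le> t" and F0: "pp i (alpha i) \<in> F"
  shows "chi alpha t (pp i (alpha i)) I = Mm I i (alpha i)"
proof -
  have ai: "a (i - 1) + alpha i = a i" "alpha i > 0" using a_prev[of i] apos'[of i] i by auto
  have "chi alpha t (pp i (alpha i)) I = (if pp i (alpha i) \<in> I then 1 else 0)"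
  proof (rule max_chi[OF I F0])
    show "pp i (alpha i) < n \<Longrightarrow> \<not> upe (pp i (alpha i))"
    proof (cases "odd i")
      case True
      then have "pp i (alpha i) = a i" using ai by (simp add: pp_def)
      moreover assume "pp i (alpha i) < n"
      ultimately have "i < t" using a_t i by (cases "i = t") auto
      then show ?thesis using upe_at[of i] True i \<open>pp i (alpha i) = a i\<close> by simp
    next
      case False
      then have "pp i (alpha i) = a (i - 1)" "2 \<le> i" using ai i by (auto simp: pp_def)
      then show ?thesis using upe_at[of "i - 1"] False i by simp
    qed
    show "2 \<le> pp i (alpha i) \<Longrightarrow> upe (pp i (alpha i) - 1)"
    proof (cases "odd i")
      case True
      then show ?thesis using upe_odd[of i "a i - 1"] ai i by (simp add: pp_def)
    next
      case False
      then have "pp i (alpha i) = a (i - 1)" "2 \<le> i" using ai i by (auto simp: pp_def)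
      then show ?thesis using upe_prev[of i] False i by simp
    qed
  qed
  then show ?thesis using F0 by (simp add: Mm_def)
qed


definition idx :: "nat \<Rightarrow> nat \<Rightarrow> nat" where
  "idx i q = (if odd i then q - a (i - 1) else a i - q)"

definition cj :: "nat \<Rightarrow> nat \<Rightarrow> nat \<Rightarrow> real" where
  "cj i m j = (if j = 0 then -1 else - real j + (if m < j then real (alpha i) else 0))"

definition cqf :: "nat \<Rightarrow> nat \<Rightarrow> nat \<Rightarrow> real" where
  "cqf i m q = (if a (i - 1) \<le> q \<and> q \<le> a i then cj i m (idx i q) else 0)"

lemma sum_cq: assumes i: "1 \<le> i" "i \<le> t"
  shows "(\<Sum>q\<in>F. cqf i m q * g q) = (\<Sum>j=0..alpha i. if pp i j \<in> F then cj i m j * g (pp i j) else 0)"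
proof -
  have ai: "a (i - 1) + alpha i = a i" using a_prev i by simp
  have fin: "finite F" by (simp add: F_def')
  have "(\<Sum>q\<in>F. cqf i m q * g q) = (\<Sum>q\<in>F \<inter> {a (i - 1)..a i}. cqf i m q * g q)"
    by (rule sum.mono_neutral_right) (auto simp: fin cqf_def)
  also have "\<dots> = (\<Sum>q\<in>{a (i - 1)..a i} \<inter> F. cqf i m q * g q)" by (simp add: Int_commute)
  also have "\<dots> = (\<Sum>q\<in>{a (i - 1)..a i}. if q \<in> F then cqf i m q * g q else 0)"
    by (rule sum.inter_restrict) simp
  also have "\<dots> = (\<Sum>j=0..alpha i. if pp i j \<in> F then cj i m j * g (pp i j) else 0)"
  proof (cases "odd i")
    case True
    show ?thesis
      by (rule sum.reindex_bij_witness[where i = "\<lambda>j. a (i - 1) + j" and j = "\<lambda>q. q - a (i - 1)"])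
         (use True ai in \<open>auto simp: pp_def cqf_def idx_def\<close>)
  next
    case False
    show ?thesis
      by (rule sum.reindex_bij_witness[where i = "\<lambda>j. a i - j" and j = "\<lambda>q. a i - q"])
         (use False ai in \<open>auto simp: pp_def cqf_def idx_def\<close>)
  qed
  finally show ?thesis .
qed

lemma aF: "j \<le> t \<Longrightarrow> a j \<in> F \<longleftrightarrow> 1 \<le> j \<and> j < t"
proof -
  assume j: "j \<le> t"
  show ?thesis
  proof
    assume "a j \<in> F"
    then show "1 \<le> j \<and> j < t" using j a_t by (cases "j = 0"; cases "j = t") (auto simp: F_def')
  next
    assume "1 \<le> j \<and> j < t"
    then show "a j \<in> F" using a_lt_n[of j] a1_ge2[of j] by (auto simp: F_def')
  qed
qed

lemma chi_s_sum: assumes i: "1 \<le> i" "i \<le> t"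
  shows "chi_s alpha t (i - 1) I + chi_s alpha t i I =
    (if pp i 0 \<in> F then chi alpha t (pp i 0) I else 0) + (if pp i (alpha i) \<in> F then chi alpha t (pp i (alpha i)) I else 0)"
proof -
  have ai: "a (i - 1) + alpha i = a i" using a_prev i by simp
  have e1: "a (i - 1) \<in> F \<longleftrightarrow> 1 \<le> i - 1 \<and> i - 1 \<le> t - 1" using aF[of "i - 1"] i by auto
  have e2: "a i \<in> F \<longleftrightarrow> 1 \<le> i \<and> i \<le> t - 1" using aF[of i] i by auto
  show ?thesis
  proof (cases "odd i")
    case True
    then have "pp i 0 = a (i - 1)" "pp i (alpha i) = a i" using ai by (auto simp: pp_def)
    then show ?thesis using e1 e2 by (simp add: chi_s_def)
  next
    case False
    then have "pp i 0 = a i" "pp i (alpha i) = a (i - 1)" using ai by (auto simp: pp_def)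
    then show ?thesis using e1 e2 by (simp add: chi_s_def)
  qed
qed

lemma BA_pointwise: assumes I: "I \<in> ideals alpha t" and i: "1 \<le> i" "i \<le> t" and m: "1 \<le> m" "m < alpha i"
  shows "(real (alpha i) *\<^sub>R chi alpha t (pp i m) + chi_s alpha t (i - 1) + chi_s alpha t i) I
     = 1 + (\<Sum>q\<in>F. cqf i m q * toggle alpha t q I)"
proof -
  define al where "al = alpha i"
  define M where "M = Mm I i"
  have al2: "2 \<le> al" using m al_def by simp
  have S: "(\<Sum>q\<in>F. cqf i m q * toggle alpha t q I) =
     (\<Sum>j=0..al. if pp i j \<in> F then cj i m j * toggle alpha t (pp i j) I else 0)"
    unfolding al_def by (rule sum_cq[OF i])
  define h where "h j = (if pp i j \<in> F then cj i m j * toggle alpha t (pp i j) I else 0)" for j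
  have split: "(\<Sum>j=0..al. h j) = h 0 + (\<Sum>j=1..al - 1. h j) + h al"
  proof -
    have "(\<Sum>j=0..al. h j) = h 0 + (\<Sum>j=Suc 0..al. h j)" by (rule sum.atLeast_Suc_atMost) simp
    also have "(\<Sum>j=Suc 0..al. h j) = (\<Sum>j=1..al - 1. h j) + h al"
      using al2 sum.cl_ivl_Suc[of h "Suc 0" "al - 1"] by simp
    finally show ?thesis by simp
  qed
  have hal: "h al = 0" using al2 m by (simp add: h_def cj_def al_def)
  have hint: "(\<Sum>j=1..al - 1. h j) = (\<Sum>j=1..al - 1. (- real j + (if m < j then real al else 0)) * (M (j - 1) - 2 * M j + M (j + 1)))"
  proof (rule sum.cong)
    fix j assume "j \<in> {1..al - 1}"
    then have j: "1 \<le> j" "j < alpha i" using al_def by auto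
    from interior[OF I i j] show "h j = (- real j + (if m < j then real al else 0)) * (M (j - 1) - 2 * M j + M (j + 1))"
      using j by (simp add: h_def cj_def M_def al_def)
  qed simp

  have h0: "h 0 = (if pp i 0 \<in> F then - (1 - M 0 - chi alpha t (pp i 0) I) else 0)"
    using bottom[OF I i] by (simp add: h_def cj_def M_def)
  have cm: "chi alpha t (pp i m) I = M m - M (m + 1)" using interior[OF I i m] by (simp add: M_def)
  note cs = chi_s_sum[OF i, of I]
  have tp: "pp i al \<in> F \<Longrightarrow> chi alpha t (pp i al) I = M al" using top[OF I i] by (simp add: M_def al_def)
  have v0: "pp i 0 \<notin> F \<Longrightarrow> M 0 = 1" by (simp add: M_def Mm_def)
  have val: "pp i al \<notin> F \<Longrightarrow> M al = 0" using al2 by (simp add: M_def Mm_def)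
  have "al - 1 + 1 = al" "1 \<le> al - 1" "m \<le> al - 1" using al2 m al_def by auto
  then have sb': "(\<Sum>j=1..al - 1. (- real j + (if m < j then real al else 0)) * (M (j - 1) - 2 * M j + M (j + 1)))
     = real (al - 1) * (M (al - 1) - M al) + M (al - 1) - M 0 + real al * ((M al - M (al - 1)) - (M (m + 1) - M m))"
    using sbp[of "al - 1" m "real al" M] by simp
  have r: "real (al - 1) = real al - 1" using al2 by simp
  have L: "(real (alpha i) *\<^sub>R chi alpha t (pp i m) + chi_s alpha t (i - 1) + chi_s alpha t i) I
     = real al * (M m - M (m + 1)) + ((if pp i 0 \<in> F then chi alpha t (pp i 0) I else 0) + (if pp i al \<in> F then chi alpha t (pp i al) I else 0))"
  proof -
    have "(real (alpha i) *\<^sub>R chi alpha t (pp i m) + chi_s alpha t (i - 1) + chi_s alpha t i) I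
       = real al * chi alpha t (pp i m) I + (chi_s alpha t (i - 1) I + chi_s alpha t i I)"
      by (simp add: scaleR_fun_def al_def)
    then show ?thesis unfolding cs cm al_def by simp
  qed
  show ?thesis
    unfolding S h_def[symmetric] split hal hint sb' r L
    using h0 tp v0 val
    by (cases "pp i 0 \<in> F"; cases "pp i al \<in> F") (simp_all add: algebra_simps)
qed


abbreviation NS where "NS i \<equiv> {a (i - 1) + 1..<a i}"

lemma NS_eq: assumes i: "1 \<le> i" "i \<le> t" shows "nonshared alpha t i = NS i"
proof -
  have ai: "a (i - 1) < a i" using a_lt i by simp
  have sh: "x \<in> shared alpha t \<longleftrightarrow> (\<exists>k. 1 \<le> k \<and> k \<le> t - 1 \<and> x = a k)" for x
    by (auto simp: shared_def)
  show ?thesis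
  proof (intro set_eqI iffI)
    fix x assume x: "x \<in> nonshared alpha t i"
    then have xs: "x \<in> segment alpha t i" "\<not> (\<exists>k. 1 \<le> k \<and> k \<le> t - 1 \<and> x = a k)"
      using sh by (auto simp: nonshared_def)
    have r: "a (i - 1) \<le> x \<and> x \<le> a i \<and> (i = 1 \<longrightarrow> 1 \<le> x) \<and> (i = t \<longrightarrow> x \<le> n)"
    proof (cases "i = 1")
      case True
      then show ?thesis using xs(1) t2 by (simp add: segment_def)
    next
      case False
      show ?thesis
      proof (cases "i = t")
        case True
        then show ?thesis using xs(1) False a_t by (simp add: segment_def)
      next
        case False2: False
        then show ?thesis using xs(1) False by (simp add: segment_def)
      qed
    qed
    have "x \<noteq> a (i - 1)"
    proof
      assume "x = a (i - 1)"
      then have "i \<noteq> 1" using r by auto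
      then have "1 \<le> i - 1 \<and> i - 1 \<le> t - 1" using i by auto
      then show False using xs(2) \<open>x = a (i - 1)\<close> by blast
    qed
    moreover have "x \<noteq> a i"
    proof
      assume "x = a i"
      then have "i \<noteq> t" using r a_t by auto
      then have "1 \<le> i \<and> i \<le> t - 1" using i by auto
      then show False using xs(2) \<open>x = a i\<close> by blast
    qed
    ultimately show "x \<in> NS i" using r by auto
  next
    fix x assume x: "x \<in> NS i"
    have nk: "x \<noteq> a k" if "1 \<le> k" "k \<le> t - 1" for k
    proof (cases "k \<le> i - 1")
      case True then show ?thesis using fa_mono[OF True, of alpha] x by auto
    next
      case False then have "i \<le> k" by simp
      then show ?thesis using fa_mono[of i k alpha] x by auto
    qed
    have "x \<in> segment alpha t i"
      using x i a_t by (auto simp: segment_def fn_def a_1)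
    then show "x \<in> nonshared alpha t i" using nk sh by (auto simp: nonshared_def)
  qed
qed

lemma NS_disj: assumes "x \<in> NS i" "x \<in> NS i'" "1 \<le> i" "1 \<le> i'" shows "i = i'"
proof -
  have "sg x = i" by (rule sg_eq) (use assms in auto)
  moreover have "sg x = i'" by (rule sg_eq) (use assms in auto)
  ultimately show ?thesis by simp
qed

lemma NS_pp: assumes i: "1 \<le> i" "i \<le> t" and x: "x \<in> NS i"
  shows "pp i (idx i x) = x \<and> 1 \<le> idx i x \<and> idx i x < alpha i"
proof -
  have ai: "a (i - 1) + alpha i = a i" using a_prev i by simp
  show ?thesis using x ai by (auto simp: pp_def idx_def)
qed

lemma NS_F: assumes i: "1 \<le> i" "i \<le> t" and x: "x \<in> NS i" shows "x \<in> F"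
  using x fa_mono[of i t alpha] i a_t by (auto simp: F_def')

definition BAel :: "nat \<Rightarrow> nat \<Rightarrow> nat set \<Rightarrow> real" where
  "BAel i x = real (alpha i) *\<^sub>R chi alpha t x + chi_s alpha t (i - 1) + chi_s alpha t i"

lemma BA_eq: "BA alpha t = (\<Union>i\<in>{1..t}. BAel i ` NS i)"
  unfolding BA_def
proof (rule SUP_cong[OF refl])
  fix i assume "i \<in> {1..t}"
  then show "{real (alpha i) *\<^sub>R chi alpha t x + chi_s alpha t (i - 1) + chi_s alpha t i |x. x \<in> nonshared alpha t i}
     = BAel i ` NS i"
    using NS_eq[of i] by (auto simp: BAel_def)
qed

lemma chi_s_span: "chi_s alpha t k \<in> span (chi alpha t ` F)"
proof (cases "1 \<le> k \<and> k \<le> t - 1")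
  case True
  then have "a k \<in> F" using aF[of k] by auto
  then show ?thesis using True by (simp add: chi_s_def span_base)
next
  case False
  have "chi_s alpha t k = 0" using False by (auto simp: chi_s_def zero_fun_def)
  then show ?thesis by (simp add: span_zero)
qed

lemma BAel_AT: assumes i: "1 \<le> i" "i \<le> t" and x: "x \<in> NS i" shows "BAel i x \<in> AT alpha t"
proof -
  have xF: "x \<in> F" by (rule NS_F[OF i x])
  have "BAel i x \<in> span (chi alpha t ` F)"
    unfolding BAel_def using xF by (intro span_add span_scale span_base chi_s_span) auto
  moreover have "equiv_const alpha t (BAel i x)"
    unfolding equiv_const_def
  proof (intro exI ballI)
    fix I assume I: "I \<in> ideals alpha t"
    from NS_pp[OF i x] have p: "pp i (idx i x) = x" "1 \<le> idx i x" "idx i x < alpha i" by auto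
    show "BAel i x I = 1 + (\<Sum>q\<in>F. cqf i (idx i x) q * toggle alpha t q I)"
      using BA_pointwise[OF I i p(2,3)] p(1) by (simp add: BAel_def)
  qed
  ultimately show ?thesis by (simp add: AT_def)
qed

definition Pr :: "nat \<Rightarrow> nat \<Rightarrow> nat set" where
  "Pr i y = (if odd i then {max 1 (a (i - 1))..y} else {y..min (a i) n})"

lemma Pr_props: assumes i: "1 \<le> i" "i \<le> t" and y: "y \<in> NS i"
  shows "Pr i y \<in> ideals alpha t \<and> (\<forall>q. q \<in> maxs alpha t (Pr i y) \<longleftrightarrow> q = y)"
proof -
  have ai: "a (i - 1) + alpha i = a i" using a_prev i by simp
  have yF: "y \<in> F" by (rule NS_F[OF i y])
  have ait: "a i \<le> n + 1" using a_t fa_mono[of i t alpha] i by simp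
  show ?thesis
  proof (cases "odd i")
    case True
    define lo where "lo = max 1 (a (i - 1))"
    have P: "Pr i y = {lo..y}" using True by (simp add: Pr_def lo_def)
    have up: "\<And>z. a (i - 1) \<le> z \<Longrightarrow> z < a i \<Longrightarrow> upe z" using upe_odd[of i] True i by blast
    have lo2: "2 \<le> lo \<Longrightarrow> \<not> upe (lo - 1)"
    proof -
      assume "2 \<le> lo"
      then have "lo = a (i - 1)" "i \<noteq> 1" using lo_def by auto
      then have "2 \<le> i" using i by simp
      then have "upe (a (i - 1) - 1) \<longleftrightarrow> even i" using i by (intro upe_prev) auto
      then show "\<not> upe (lo - 1)" using \<open>lo = a (i - 1)\<close> True by simp
    qed
    have Pi: "{lo..y} \<in> ideals alpha t"
      by (rule interval_ideal) (use lo2 up y yF lo_def in \<open>auto simp: F_def'\<close>)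
    have m: "q \<in> maxs alpha t {lo..y} \<longleftrightarrow> q = y" for q
    proof -
      have "q \<in> maxs alpha t {lo..y} \<longleftrightarrow> q \<in> {lo..y} \<and> (\<forall>z. fcover alpha t q z \<longrightarrow> z \<notin> {lo..y})"
        by (rule maxs_iff[OF Pi])
      also have "\<dots> \<longleftrightarrow> q = y"
      proof
        assume h: "q \<in> {lo..y} \<and> (\<forall>z. fcover alpha t q z \<longrightarrow> z \<notin> {lo..y})"
        show "q = y"
        proof (rule ccontr)
          assume "q \<noteq> y"
          then have "q < y" "a (i - 1) \<le> q" using h lo_def by auto
          then have "fcover alpha t q (q + 1)" using up[of q] y yF h lo_def by (auto simp: fcover_iff F_def')
          with h \<open>q < y\<close> show False by auto
        qed
      next
        assume "q = y"
        moreover have "\<not> fcover alpha t y z" if "z \<in> {lo..y}" for z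
        proof
          assume c: "fcover alpha t y z"
          have "upe (y - 1)" using up[of "y - 1"] y by auto
          then show False using c that by (auto simp: fcover_iff)
        qed
        ultimately show "q \<in> {lo..y} \<and> (\<forall>z. fcover alpha t q z \<longrightarrow> z \<notin> {lo..y})"
          using y lo_def by auto
      qed
      finally show ?thesis .
    qed
    show ?thesis using P Pi m by simp
  next
    case False
    define hi where "hi = min (a i) n"
    have P: "Pr i y = {y..hi}" using False by (simp add: Pr_def hi_def)
    have dn: "\<And>z. a (i - 1) \<le> z \<Longrightarrow> z < a i \<Longrightarrow> \<not> upe z" using upe_even[of i] False i by blast
    have hi2: "y \<le> hi \<Longrightarrow> hi < n \<Longrightarrow> upe hi"
    proof -
      assume "hi < n"
      then have "hi = a i" "a i < n" using hi_def by auto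
      then have "i < t" using a_t i by (cases "i = t") auto
      then have "upe (a i) \<longleftrightarrow> even i" using i by (intro upe_at) auto
      then show "upe hi" using \<open>hi = a i\<close> False by simp
    qed
    have Pi: "{y..hi} \<in> ideals alpha t"
      by (rule interval_ideal) (use hi2 dn y yF hi_def in \<open>auto simp: F_def'\<close>)
    have m: "q \<in> maxs alpha t {y..hi} \<longleftrightarrow> q = y" for q
    proof -
      have "q \<in> maxs alpha t {y..hi} \<longleftrightarrow> q \<in> {y..hi} \<and> (\<forall>z. fcover alpha t q z \<longrightarrow> z \<notin> {y..hi})"
        by (rule maxs_iff[OF Pi])
      also have "\<dots> \<longleftrightarrow> q = y"
      proof
        assume h: "q \<in> {y..hi} \<and> (\<forall>z. fcover alpha t q z \<longrightarrow> z \<notin> {y..hi})"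
        show "q = y"
        proof (rule ccontr)
          assume "q \<noteq> y"
          then have "y < q" "q \<le> a i" using h hi_def by auto
          then have "fcover alpha t q (q - 1)" using dn[of "q - 1"] y yF h hi_def by (auto simp: fcover_iff F_def')
          with h \<open>y < q\<close> show False by auto
        qed
      next
        assume "q = y"
        moreover have "\<not> fcover alpha t y z" if "z \<in> {y..hi}" for z
        proof
          assume c: "fcover alpha t y z"
          have "\<not> upe y" using dn[of y] y by auto
          then show False using c that by (auto simp: fcover_iff)
        qed
        ultimately show "q \<in> {y..hi} \<and> (\<forall>z. fcover alpha t q z \<longrightarrow> z \<notin> {y..hi})"
          using y yF hi_def ait by (auto simp: F_def')
      qed
      finally show ?thesis .
    qed
    show ?thesis using P Pi m by simp
  qed
qed

lemma chi_Pr: assumes i: "1 \<le> i" "i \<le> t" and y: "y \<in> NS i"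
  shows "chi alpha t q (Pr i y) = (if q = y then 1 else 0)"
  using Pr_props[OF assms] by (simp add: chi_def)

lemma y_not_shared: assumes i: "1 \<le> i" "i \<le> t" and y: "y \<in> NS i" and k: "1 \<le> k" "k \<le> t - 1"
  shows "a k \<noteq> y"
proof -
  have "y \<in> nonshared alpha t i" using NS_eq[OF i] y by simp
  moreover have "a k \<in> shared alpha t" using k by (auto simp: shared_def)
  ultimately show ?thesis by (auto simp: nonshared_def)
qed

lemma BAel_eval: assumes i: "1 \<le> i" "i \<le> t" and i': "1 \<le> i'" "i' \<le> t"
  and x: "x \<in> NS i'" and y: "y \<in> NS i"
  shows "BAel i' x (Pr i y) = (if x = y then real (alpha i') else 0)"
proof -
  have "chi_s alpha t k (Pr i y) = 0" for k
    using chi_Pr[OF i y] y_not_shared[OF i y, of k] by (auto simp: chi_s_def)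
  then show ?thesis using chi_Pr[OF i y] by (simp add: BAel_def scaleR_fun_def)
qed

lemma BAel_inj: assumes i: "1 \<le> i" "i \<le> t" and i': "1 \<le> i'" "i' \<le> t"
  and x: "x \<in> NS i'" and y: "y \<in> NS i" and e: "BAel i' x = BAel i y"
  shows "x = y \<and> i = i'"
proof -
  have "BAel i' x (Pr i y) = BAel i y (Pr i y)" using e by simp
  then have "(if x = y then real (alpha i') else 0) = real (alpha i)"
    using BAel_eval[OF i i' x y] BAel_eval[OF i i y y] by simp
  moreover have "alpha i > 0" using i by (intro apos') auto
  ultimately have "x = y" by (auto split: if_splits)
  then show ?thesis using NS_disj[of y i i'] x y i i' by auto
qed

end

lemma sum_fun_app: "(\<Sum>x\<in>A. f x) y = (\<Sum>x\<in>A. f x y)"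
  by (induction A rule: infinite_finite_induct) (auto simp: plus_fun_def zero_fun_def)

context fctx begin

lemma equiv_const_subspace: "subspace {f. equiv_const alpha t f}"
  unfolding subspace_def
proof (intro conjI ballI allI)
  show "0 \<in> {f. equiv_const alpha t f}"
    unfolding equiv_const_def by (auto intro!: exI[of _ 0] exI[of _ "\<lambda>_. 0"])
next
  fix x y assume x: "x \<in> {f. equiv_const alpha t f}" and y: "y \<in> {f. equiv_const alpha t f}"
  from x obtain c1 cq1 where 1: "\<forall>I\<in>ideals alpha t. x I = c1 + (\<Sum>q\<in>F. cq1 q * toggle alpha t q I)"
    unfolding equiv_const_def by auto
  from y obtain c2 cq2 where 2: "\<forall>I\<in>ideals alpha t. y I = c2 + (\<Sum>q\<in>F. cq2 q * toggle alpha t q I)"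
    unfolding equiv_const_def by auto
  show "x + y \<in> {f. equiv_const alpha t f}"
    unfolding equiv_const_def
    by (auto intro!: exI[of _ "c1 + c2"] exI[of _ "\<lambda>q. cq1 q + cq2 q"]
          simp: 1 2 distrib_right sum.distrib)
next
  fix c :: real and x assume x: "x \<in> {f. equiv_const alpha t f}"
  from x obtain c1 cq1 where 1: "\<forall>I\<in>ideals alpha t. x I = c1 + (\<Sum>q\<in>F. cq1 q * toggle alpha t q I)"
    unfolding equiv_const_def by auto
  show "c *\<^sub>R x \<in> {f. equiv_const alpha t f}"
    unfolding equiv_const_def
    by (auto intro!: exI[of _ "c * c1"] exI[of _ "\<lambda>q. c * cq1 q"]
          simp: 1 scaleR_fun_def distrib_left sum_distrib_left mult.assoc)
qed

lemma AT_subspace: "subspace (AT alpha t)"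
proof -
  have "AT alpha t = span (chi alpha t ` F) \<inter> {f. equiv_const alpha t f}" by (auto simp: AT_def)
  then show ?thesis using subspace_inter[OF subspace_span equiv_const_subspace] by simp
qed

lemma BA_sub_AT: "BA alpha t \<subseteq> AT alpha t"
  unfolding BA_eq using BAel_AT by auto

lemma span_BA_sub: "span (BA alpha t) \<subseteq> AT alpha t"
  by (rule span_minimal[OF BA_sub_AT AT_subspace])

lemma evalBA: assumes w: "w \<in> BA alpha t" and i: "1 \<le> i" "i \<le> t" and y: "y \<in> NS i"
  shows "w (Pr i y) = (if w = BAel i y then real (alpha i) else 0)"
proof -
  from w obtain i' x where i': "1 \<le> i'" "i' \<le> t" and x: "x \<in> NS i'" and wd: "w = BAel i' x"
    unfolding BA_eq by auto
  show ?thesis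
  proof (cases "x = y")
    case True
    then have "i' = i" using NS_disj[of y i' i] x y i i' by auto
    then show ?thesis using wd True BAel_eval[OF i i' x y] by simp
  next
    case False
    have "w \<noteq> BAel i y" using BAel_inj[OF i i' x y] False wd by auto
    then show ?thesis using wd False BAel_eval[OF i i' x y] by simp
  qed
qed

lemma BA_indep: "independent (BA alpha t)"
proof
  assume "dependent (BA alpha t)"
  then obtain T u v where T: "finite T" "T \<subseteq> BA alpha t" "(\<Sum>v\<in>T. u v *\<^sub>R v) = 0"
    and v: "v \<in> T" "u v \<noteq> 0"
    unfolding dependent_explicit by blast
  have "v \<in> BA alpha t" using v(1) T(2) by blast
  then have "v \<in> (\<Union>i\<in>{1..t}. BAel i ` NS i)" by (simp only: BA_eq)
  then obtain i y where i: "1 \<le> i" "i \<le> t" and y: "y \<in> NS i" and vd: "v = BAel i y"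
    by auto
  have "0 = (\<Sum>w\<in>T. u w *\<^sub>R w) (Pr i y)" using T by (simp add: zero_fun_def)
  also have "\<dots> = (\<Sum>w\<in>T. u w * w (Pr i y))" by (simp add: sum_fun_app scaleR_fun_def)
  also have "\<dots> = (\<Sum>w\<in>T. u w * (if w = v then real (alpha i) else 0))"
  proof (rule sum.cong[OF refl])
    fix w assume "w \<in> T"
    then have "w \<in> BA alpha t" using T(2) by blast
    from evalBA[OF this i y] show "u w * w (Pr i y) = u w * (if w = v then real (alpha i) else 0)"
      using vd by simp
  qed
  also have "\<dots> = u v * real (alpha i)" using T(1) v(1)
    by (simp add: if_distrib[of "\<lambda>z. u _ * z"] sum.delta' cong: if_cong)
  finally have "u v * real (alpha i) = 0" by simp
  moreover have "alpha i > 0" using i by (intro apos') auto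
  ultimately show False using v by simp
qed

lemma BA_card: "card (BA alpha t) = (\<Sum>i=1..t. alpha i - 1)"
proof -
  have "card (BA alpha t) = (\<Sum>i\<in>{1..t}. card (BAel i ` NS i))"
    unfolding BA_eq
  proof (rule card_UN_disjoint)
    show "\<forall>i\<in>{1..t}. \<forall>j\<in>{1..t}. i \<noteq> j \<longrightarrow> BAel i ` NS i \<inter> BAel j ` NS j = {}"
      using BAel_inj by fastforce
  qed auto
  also have "\<dots> = (\<Sum>i\<in>{1..t}. alpha i - 1)"
  proof (rule sum.cong[OF refl])
    fix i assume i: "i \<in> {1..t}"
    have "inj_on (BAel i) (NS i)" using BAel_inj[of i i] i by (auto simp: inj_on_def)
    then have "card (BAel i ` NS i) = card (NS i)" by (rule card_image)
    also have "\<dots> = alpha i - 1" using a_prev[of i] i by auto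
    finally show "card (BAel i ` NS i) = alpha i - 1" .
  qed
  finally show ?thesis .
qed

lemma BA_finite: "finite (BA alpha t)" unfolding BA_eq by auto


lemma a_inj: "inj_on a {1..t - 1}"
proof (rule inj_onI)
  fix k l assume k: "k \<in> {1..t - 1}" and l: "l \<in> {1..t - 1}" and e: "a k = a l"
  show "k = l"
  proof (rule ccontr)
    assume "k \<noteq> l"
    then have "k < l \<or> l < k" by arith
    then show False
    proof
      assume "k < l" then have "a k < a l" by (rule a_strict) (use l in auto)
      with e show False by simp
    next
      assume "l < k" then have "a l < a k" by (rule a_strict) (use k in auto)
      with e show False by simp
    qed
  qed
qed

lemma partition_sum: "(\<Sum>q\<in>F. g q) = (\<Sum>i=1..t. \<Sum>x\<in>NS i. g x) + (\<Sum>k=1..t - 1. g (a k))"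
proof -
  have F_eq: "F = (\<Union>i\<in>{1..t}. NS i) \<union> a ` {1..t - 1}"
  proof (intro set_eqI iffI)
    fix q assume q: "q \<in> F"
    then have "q < a t" using a_t by (simp add: F_def')
    note sp = sg_props[OF this]
    define i where "i = sg q"
    have i: "1 \<le> i" "i \<le> t" "a (i - 1) \<le> q" "q < a i" using sp unfolding i_def by auto
    show "q \<in> (\<Union>i\<in>{1..t}. NS i) \<union> a ` {1..t - 1}"
    proof (cases "q = a (i - 1)")
      case True
      have "i \<noteq> 1" using True q by (auto simp: F_def')
      then have "i - 1 \<in> {1..t - 1}" using i by auto
      then have "q \<in> a ` {1..t - 1}" using True by (rule rev_image_eqI)
      then show ?thesis by (rule UnI2)
    next
      case False
      then have "q \<in> NS i" using i by auto
      then have "q \<in> (\<Union>i\<in>{1..t}. NS i)" using i by (intro UN_I[of i]) auto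
      then show ?thesis by (rule UnI1)
    qed
  next
    fix q assume "q \<in> (\<Union>i\<in>{1..t}. NS i) \<union> a ` {1..t - 1}"
    then show "q \<in> F"
    proof
      assume "q \<in> (\<Union>i\<in>{1..t}. NS i)"
      then obtain i where "i \<in> {1..t}" "q \<in> NS i" by blast
      then show "q \<in> F" using NS_F[of i q] by auto
    next
      assume "q \<in> a ` {1..t - 1}"
      then obtain k where "k \<in> {1..t - 1}" "q = a k" by blast
      then show "q \<in> F" using aF[of k] by auto
    qed
  qed
  have disj: "(\<Union>i\<in>{1..t}. NS i) \<inter> a ` {1..t - 1} = {}"
  proof (rule ccontr)
    assume "(\<Union>i\<in>{1..t}. NS i) \<inter> a ` {1..t - 1} \<noteq> {}"
    then obtain i k where "i \<in> {1..t}" "a k \<in> NS i" "k \<in> {1..t - 1}" by blast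
    then show False using y_not_shared[of i "a k" k] by auto
  qed
  have pd: "\<forall>i\<in>{1..t}. \<forall>j\<in>{1..t}. i \<noteq> j \<longrightarrow> NS i \<inter> NS j = {}"
  proof (intro ballI impI)
    fix i j assume ij: "i \<in> {1..t}" "j \<in> {1..t}" "i \<noteq> j"
    show "NS i \<inter> NS j = {}"
    proof (rule ccontr)
      assume "NS i \<inter> NS j \<noteq> {}"
      then obtain x where "x \<in> NS i" "x \<in> NS j" by blast
      then show False using NS_disj[of x i j] ij by auto
    qed
  qed
  have "(\<Sum>q\<in>F. g q) = (\<Sum>q\<in>(\<Union>i\<in>{1..t}. NS i). g q) + (\<Sum>q\<in>a ` {1..t - 1}. g q)"
    unfolding F_eq by (rule sum.union_disjoint) (use disj in auto)
  also have "(\<Sum>q\<in>(\<Union>i\<in>{1..t}. NS i). g q) = (\<Sum>i=1..t. \<Sum>x\<in>NS i. g x)"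
    by (rule sum.UNION_disjoint) (use pd in auto)
  also have "(\<Sum>q\<in>a ` {1..t - 1}. g q) = (\<Sum>k=1..t - 1. g (a k))"
    by (subst sum.reindex[OF a_inj]) (simp add: comp_def)
  finally show ?thesis .
qed

end

lemma (in fw) f_repr: "(\<Sum>q\<in>F. b q * X q) = (\<Sum>i=1..t. \<Sum>x\<in>NS i. b x / real (alpha i) * (real (alpha i) * X x + Y (i - 1) + Y i))"
  if Y: "\<And>k. Y k = (if 1 \<le> k \<and> k \<le> t - 1 then X (a k) else 0)"
proof -
  have an: "\<And>i. i \<in> {1..t} \<Longrightarrow> real (alpha i) \<noteq> 0" using apos by auto
  have "(\<Sum>i=1..t. \<Sum>x\<in>NS i. b x / real (alpha i) * (real (alpha i) * X x + Y (i - 1) + Y i))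
     = (\<Sum>i=1..t. (\<Sum>x\<in>NS i. b x * X x) + sigma b i * (Y (i - 1) + Y i))"
  proof (rule sum.cong[OF refl])
    fix i assume i: "i \<in> {1..t}"
    have "(\<Sum>x\<in>NS i. b x / real (alpha i) * (real (alpha i) * X x + Y (i - 1) + Y i))
       = (\<Sum>x\<in>NS i. b x * X x + b x / real (alpha i) * (Y (i - 1) + Y i))"
      by (rule sum.cong[OF refl]) (use an[OF i] in \<open>simp add: field_simps\<close>)
    also have "\<dots> = (\<Sum>x\<in>NS i. b x * X x) + sigma b i * (Y (i - 1) + Y i)"
      by (simp add: sum.distrib sigma_def sum_distrib_right sum_divide_distrib)
    finally show "(\<Sum>x\<in>NS i. b x / real (alpha i) * (real (alpha i) * X x + Y (i - 1) + Y i))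
       = (\<Sum>x\<in>NS i. b x * X x) + sigma b i * (Y (i - 1) + Y i)" .
  qed
  also have "\<dots> = (\<Sum>i=1..t. \<Sum>x\<in>NS i. b x * X x) + ((\<Sum>i=1..t. sigma b i * Y (i - 1)) + (\<Sum>i=1..t. sigma b i * Y i))"
    by (simp add: sum.distrib distrib_left)
  also have "(\<Sum>i=1..t. sigma b i * Y (i - 1)) = (\<Sum>k=1..t - 1. sigma b (k + 1) * X (a k))"
  proof -
    have "(\<Sum>i=1..t. sigma b i * Y (i - 1)) = sigma b 1 * Y 0 + (\<Sum>i=Suc 1..t. sigma b i * Y (i - 1))"
      using t2 by (simp add: sum.atLeast_Suc_atMost)
    also have "(\<Sum>i=Suc 1..t. sigma b i * Y (i - 1)) = (\<Sum>k=1..t - 1. sigma b (Suc k) * Y k)"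
    proof -
      have "t = Suc (t - 1)" using t2 by simp
      then have "(\<Sum>i=Suc 1..t. sigma b i * Y (i - 1)) = (\<Sum>i=Suc 1..Suc (t - 1). sigma b i * Y (i - 1))" by simp
      also have "\<dots> = (\<Sum>k=1..t - 1. sigma b (Suc k) * Y k)"
        using sum.shift_bounds_cl_Suc_ivl[of "\<lambda>i. sigma b i * Y (i - 1)" 1 "t - 1"] by simp
      finally show ?thesis .
    qed
    also have "\<dots> = (\<Sum>k=1..t - 1. sigma b (k + 1) * X (a k))"
      by (rule sum.cong[OF refl]) (auto simp: Y)
    finally show ?thesis by (simp add: Y)
  qed
  also have "(\<Sum>i=1..t. sigma b i * Y i) = (\<Sum>k=1..t - 1. sigma b k * X (a k))"
  proof -
    have e: "{1..t} = insert t {1..t - 1}" using t2 by auto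
    have "(\<Sum>i=1..t. sigma b i * Y i) = (\<Sum>i=1..t - 1. sigma b i * Y i) + sigma b t * Y t"
      unfolding e by (subst sum.insert) auto
    also have "(\<Sum>i=1..t - 1. sigma b i * Y i) = (\<Sum>k=1..t - 1. sigma b k * X (a k))"
      by (rule sum.cong[OF refl]) (auto simp: Y)
    finally show ?thesis using t2 by (simp add: Y)
  qed
  also have "(\<Sum>k=1..t - 1. sigma b (k + 1) * X (a k)) + (\<Sum>k=1..t - 1. sigma b k * X (a k))
      = (\<Sum>k=1..t - 1. b (a k) * X (a k))"
    unfolding sum.distrib[symmetric]
    by (rule sum.cong[OF refl]) (use constraint in \<open>auto simp: algebra_simps\<close>)
  finally show ?thesis by (simp add: partition_sum)
qed


context fctx begin

lemma AT_sub_span: "AT alpha t \<subseteq> span (BA alpha t)"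
proof
  fix f assume f: "f \<in> AT alpha t"
  then have fs: "f \<in> span (chi alpha t ` F)" and fe: "equiv_const alpha t f" by (auto simp: AT_def)
  have finF: "finite F" by (simp add: F_def')
  obtain U where U: "U \<subseteq> F" "inj_on (chi alpha t) U" "chi alpha t ` F = chi alpha t ` U"
    using subset_image_inj[of "chi alpha t ` F" "chi alpha t" F] by auto
  from fs obtain u where fu: "f = (\<Sum>v\<in>chi alpha t ` F. u v *\<^sub>R v)"
    using span_finite[of "chi alpha t ` F"] finF by auto
  define b where "b q = (if q \<in> U then u (chi alpha t q) else 0)" for q
  have fb: "f = (\<Sum>q\<in>F. b q *\<^sub>R chi alpha t q)"
  proof -
    have "f = (\<Sum>v\<in>chi alpha t ` U. u v *\<^sub>R v)" using fu U(3) by simp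
    also have "\<dots> = (\<Sum>q\<in>U. u (chi alpha t q) *\<^sub>R chi alpha t q)"
      by (subst sum.reindex[OF U(2)]) (simp add: comp_def)
    also have "\<dots> = (\<Sum>q\<in>F. b q *\<^sub>R chi alpha t q)"
      by (rule sum.mono_neutral_cong_left) (use finF U(1) in \<open>auto simp: b_def\<close>)
    finally show ?thesis .
  qed
  have fI: "f I = (\<Sum>q\<in>F. b q * chi alpha t q I)" for I
    by (subst fb) (simp add: sum_fun_app scaleR_fun_def)
  from fe obtain c cq where ce: "\<forall>I\<in>ideals alpha t. f I = c + (\<Sum>q\<in>F. cq q * toggle alpha t q I)"
    unfolding equiv_const_def by auto
  have "fw alpha t b cq c"
  proof (intro fw.intro fw_axioms.intro)
    show "fctx alpha t" by (rule fctx_axioms)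
    fix I assume "I \<in> ideals alpha t"
    then show "G b cq I = c" using ce fI[of I] by (simp add: G_def)
  qed
  then interpret W: fw alpha t b cq c .
  define R where "R = (\<Sum>i=1..t. \<Sum>x\<in>NS i. (b x / real (alpha i)) *\<^sub>R BAel i x)"
  have "f = R"
  proof
    fix I
    have "R I = (\<Sum>i=1..t. \<Sum>x\<in>NS i. b x / real (alpha i) * (real (alpha i) * chi alpha t x I + chi_s alpha t (i - 1) I + chi_s alpha t i I))"
      by (simp add: R_def sum_fun_app scaleR_fun_def BAel_def)
    also have "\<dots> = (\<Sum>q\<in>F. b q * chi alpha t q I)"
      by (rule W.f_repr[symmetric]) (simp add: chi_s_def)
    finally show "f I = R I" using fI by simp
  qed
  moreover have "R \<in> span (BA alpha t)"
    unfolding R_def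
  proof (intro span_sum span_scale span_base)
    fix i x assume "i \<in> {1..t}" "x \<in> NS i"
    then show "BAel i x \<in> BA alpha t" unfolding BA_eq by blast
  qed
  ultimately show "f \<in> span (BA alpha t)" by simp
qed

end

theorem theorem3p5:
  fixes alpha :: "nat \<Rightarrow> nat" and t :: nat
  assumes "t \<ge> 2"
    and "\<forall>i\<in>{1..t}. alpha i > 0"
    and "alpha 1 \<ge> 2" and "alpha t \<ge> 2"
  shows "independent (BA alpha t) \<and> span (BA alpha t) = AT alpha t \<and>
         dim (AT alpha t) = (\<Sum>i=1..t. alpha i - 1)"
proof -
  interpret fctx alpha t by unfold_locales (use assms in auto)
  have ind: "independent (BA alpha t)" by (rule BA_indep)
  have sp: "span (BA alpha t) = AT alpha t" using span_BA_sub AT_sub_span by auto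
  have "dim (AT alpha t) = card (BA alpha t)" using dim_span_eq_card_independent[OF ind] sp by simp
  then show ?thesis using ind sp BA_card by simp
qed

end
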